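(* Let $w$ satisfy (A1), fix $\delta\in(0,1/2)$, and suppose that (A2) holds, i.e. $a_\delta(x)\ge \int_0^1 \widetilde w_\delta(x,y)\,dy$ for all $x\in\Omega$. Then the comparison operator $\widetilde{\mathcal P}_\delta:L^2(\Omega)\to L^2(\Omega)$ is invertible and there is a constant $C=C(w,\delta)>0$ with $\|(\widetilde{\mathcal P}_\delta)^{-1}\|_{L^2\to L^2}\le C$.
   Context: Throughout, $\Omega=(0,1)$, $\delta\in(0,1/2)$ is the nonlocal horizon, $B_\delta(x)=(x-\delta,x+\delta)$, and $\chi_A$ denotes the indicator function of a set $A$. A function $w:[0,\infty)\to[0,\infty)$ satisfies (A1) if $w$ is continuous and nonincreasing on $[0,1)$, positive on $(0,1)$, $w(r)=0$ for $r\ge 1$, and $\int_{\mathbb R} w(|z|)|z|^2\,dz=2$. Set $w_\delta(x,y)=\delta^{-3}w(|x-y|/\delta)$, $a_\delta(x)=\int_0^1 w_\delta(x,y)\,dy$, and $b_\delta(x)=\frac{2}{(x+\delta)^2}\int_{x-\delta}^{0}(x-y)w_\delta(x,y)\,dy$ for $x\in(0,\delta)$, $b_\delta(x)=\frac{2}{(1-x+\delta)^2}\int_{1}^{x+\delta}(y-x)w_\delta(x,y)\,dy$ for $x\in(1-\delta,1)$, and $b_\delta(x)=0$ otherwise. Define $\widetilde w_\delta(x,y)=|w_\delta(x,y)-b_\delta(x)\chi_{(0,\delta)}(|y-x|)|$ and the comparison operator $\widetilde{\mathcal P}_\delta u(x)=a_\delta(x)u(x)-\int_0^1 u(y)\widetilde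 w_\delta(x,y)\,dy$ on $L^2(\Omega)$. *)

theory Defs
  imports "HOL-Analysis.Analysis"
begin

definition A1 :: "(real \<Rightarrow> real) \<Rightarrow> bool" where
  "A1 w \<longleftrightarrow>
     (\<forall>r\<ge>0. w r \<ge> 0) \<and>
     continuous_on {0..<1} w \<and>
     (\<forall>r s. 0 \<le> r \<and> r \<le> s \<and> s < 1 \<longrightarrow> w s \<le> w r) \<and>
     (\<forall>r. 0 < r \<and> r < 1 \<longrightarrow> w r > 0) \<and>
     (\<forall>r\<ge>1. w r = 0) \<and>
     has_bochner_integral lborel (\<lambda>z. w \<bar>z\<bar> * z\<^sup>2) 2"

definition w_d :: "(real \<Rightarrow> real) \<Rightarrow> real \<Rightarrow> real \<Rightarrow> real \<Rightarrow> real" where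
  "w_d w \<delta> x y = w (\<bar>x - y\<bar> / \<delta>) / \<delta> ^ 3"

definition a_d :: "(real \<Rightarrow> real) \<Rightarrow> real \<Rightarrow> real \<Rightarrow> real" where
  "a_d w \<delta> x = (LINT y:{0<..<1}|lborel. w_d w \<delta> x y)"

definition b_d :: "(real \<Rightarrow> real) \<Rightarrow> real \<Rightarrow> real \<Rightarrow> real" where
  "b_d w \<delta> x =
     (if 0 < x \<and> x < \<delta> then
        2 / (x + \<delta>)\<^sup>2 * (LBINT y = x - \<delta>..0. (x - y) * w_d w \<delta> x y)
      else if 1 - \<delta> < x \<and> x < 1 then
        2 / (1 - x + \<delta>)\<^sup>2 * (LBINT y = 1..x + \<delta>. (y - x) * w_d w \<delta> x y)
      else 0)"

definition wt_d :: "(real \<Rightarrow> real) \<Rightarrow> real \<Rightarrow> real \<Rightarrow> real \<Rightarrow> real" where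
  "wt_d w \<delta> x y =
     \<bar>w_d w \<delta> x y - b_d w \<delta> x * indicator {0<..<\<delta>} \<bar>y - x\<bar>\<bar>"

definition Pt :: "(real \<Rightarrow> real) \<Rightarrow> real \<Rightarrow> (real \<Rightarrow> real) \<Rightarrow> real \<Rightarrow> real" where
  "Pt w \<delta> u x = a_d w \<delta> x * u x - (LINT y:{0<..<1}|lborel. u y * wt_d w \<delta> x y)"

abbreviation Om :: "real measure" where
  "Om \<equiv> restrict_space lborel {0<..<1}"

definition L2 :: "(real \<Rightarrow> real) \<Rightarrow> bool" where
  "L2 u \<longleftrightarrow> u \<in> borel_measurable Om \<and> integrable Om (\<lambda>x. (u x)\<^sup>2)"

definition L2norm :: "(real \<Rightarrow> real) \<Rightarrow> real" where
  "L2norm u = sqrt (\<integral>x. (u x)\<^sup>2 \<partial>Om)"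

end

theory Submission
  imports Defs
begin

lemma Om_space[simp]: "space Om = {0<..<1}" by (simp add: space_restrict_space)

lemma Om_finite: "finite_measure Om"
  by (rule finite_measureI) (simp add: emeasure_restrict_space)

lemma Om_sets_interval: "{p..q} \<inter> {0<..<1} \<in> sets Om"
  by (simp add: sets_restrict_space_iff)

lemma set_int_Om: "(LINT y:{0<..<1}|lborel. f y) = (\<integral>y. f y \<partial>Om)" for f :: "real \<Rightarrow> real"
  using integral_restrict_space[of "{0<..<1}" lborel f] by (simp add: set_lebesgue_integral_def)

lemma Om_integrable_bound:
  fixes f :: "real \<Rightarrow> real"
  assumes "f \<in> borel_measurable borel" "\<And>y. y \<in> {0<..<1} \<Longrightarrow> \<bar>f y\<bar> \<le> B"
  shows "integrable Om f"
proof -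
  interpret finite_measure Om by (rule Om_finite)
  show ?thesis
    by (rule integrable_const_bound[where B=B]) (use assms in \<open>auto intro!: measurable_restrict_space1\<close>)
qed

lemma int_Icc_bound:
  fixes f :: "real \<Rightarrow> real"
  assumes "f \<in> borel_measurable borel" "\<And>y. y \<in> {p..q} \<Longrightarrow> \<bar>f y\<bar> \<le> B"
  shows "integrable lborel (\<lambda>y. indicator {p..q} y * f y)"
proof (rule Bochner_Integration.integrable_bound)
  show "integrable lborel (\<lambda>y. indicator {p..q} y * \<bar>B\<bar>)"
    by (intro integrable_mult_left integrable_real_indicator) (auto simp: emeasure_lborel_Icc_eq)
  show "(\<lambda>y. indicator {p..q} y * f y) \<in> borel_measurable lborel" using assms(1) by measurable
  show "AE x in lborel. norm (indicator {p..q} x * f x) \<le> norm (indicator {p..q} x * \<bar>B\<bar>)"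
    using assms(2) by (auto split: split_indicator intro!: always_eventually) (meson abs_ge_self order_trans)
qed

lemma int_lin:
  fixes p q c :: real
  assumes "p \<le> q"
  shows "(\<integral>y. indicator {p..q} y * (c - y) \<partial>lborel) = c*(q-p) - (q^2-p^2)/2"
proof -
  have h1: "(LBINT y=p..q. c - y) = (c*q - q^2/2) - (c*p - p^2/2)"
    by (rule interval_integral_FTC_finite)
       (auto intro!: continuous_intros derivative_eq_intros simp: has_real_derivative_iff_has_vector_derivative[symmetric])
  have h2: "(\<integral>y. indicator {p..q} y * (c - y) \<partial>lborel) = (LBINT y=p..q. c - y)"
    using assms by (simp add: interval_integral_Icc set_lebesgue_integral_def mult.commute)
  show ?thesis unfolding h2 h1 by (simp add: power2_eq_square field_simps)
qed

lemma int_lin_K: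
  fixes p q c K :: real
  assumes "p \<le> q"
  shows "(\<integral>y. indicator {p..q} y * ((c - y) * K) \<partial>lborel) = K * (c*(q-p) - (q^2-p^2)/2)"
proof -
  have "(\<integral>y. indicator {p..q} y * ((c - y) * K) \<partial>lborel) = K * (\<integral>y. indicator {p..q} y * (c - y) \<partial>lborel)"
    by (subst integral_mult_right_zero[symmetric]) (simp add: ac_simps)
  then show ?thesis using int_lin[OF assms] by simp
qed

lemma int_ind_mono:
  fixes f g :: "real \<Rightarrow> real"
  assumes "f \<in> borel_measurable borel" "\<And>y. y \<in> {p..q} \<Longrightarrow> \<bar>f y\<bar> \<le> B"
    "g \<in> borel_measurable borel" "\<And>y. y \<in> {p..q} \<Longrightarrow> \<bar>g y\<bar> \<le> B'"
    "\<And>y. y \<in> {p..q} \<Longrightarrow> f y \<le> g y"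
  shows "(\<integral>y. indicator {p..q} y * f y \<partial>lborel) \<le> (\<integral>y. indicator {p..q} y * g y \<partial>lborel)"
  by (rule integral_mono[OF int_Icc_bound[OF assms(1,2)] int_Icc_bound[OF assms(3,4)]])
     (use assms(5) in \<open>auto split: split_indicator\<close>)

lemma lborel_reflect: "(\<integral>y. f y \<partial>lborel) = (\<integral>y. f (1 - y) \<partial>lborel)" for f :: "real \<Rightarrow> real"
  using lborel_integral_real_affine[of "-1" f 1] by simp

lemma Om_reflect: "(\<integral>y. f y \<partial>Om) = (\<integral>y. f (1 - y) \<partial>Om)" for f :: "real \<Rightarrow> real"
proof -
  have "(\<integral>y. f y \<partial>Om) = (\<integral>y. indicator {0<..<1} y * f y \<partial>lborel)"
    by (subst integral_restrict_space) auto
  also have "\<dots> = (\<integral>y. indicator {0<..<1} (1 - y) * f (1 - y) \<partial>lborel)"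
    by (rule lborel_reflect)
  also have "\<dots> = (\<integral>y. indicator {0<..<1} y * f (1 - y) \<partial>lborel)"
    by (intro Bochner_Integration.integral_cong) (auto split: split_indicator)
  also have "\<dots> = (\<integral>y. f (1 - y) \<partial>Om)"
    by (subst integral_restrict_space) auto
  finally show ?thesis .
qed

lemma Om_mono:
  fixes f g :: "real \<Rightarrow> real"
  assumes "f \<in> borel_measurable borel" "\<And>y. y \<in> {0<..<1} \<Longrightarrow> \<bar>f y\<bar> \<le> B"
    "g \<in> borel_measurable borel" "\<And>y. y \<in> {0<..<1} \<Longrightarrow> \<bar>g y\<bar> \<le> B'"
    "\<And>y. y \<in> {0<..<1} \<Longrightarrow> f y \<le> g y"
  shows "(\<integral>y. f y \<partial>Om) \<le> (\<integral>y. g y \<partial>Om)"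
  by (rule integral_mono[OF Om_integrable_bound[OF assms(1,2)] Om_integrable_bound[OF assms(3,4)]])
     (use assms(5) in auto)

lemma Om_ind_Icc:
  assumes "0 < p" "p \<le> q" "q < 1"
  shows "(\<integral>y. indicator {p..q} y * c \<partial>Om) = c * (q - p)"
proof -
  have "(\<integral>y. indicator {p..q} y * c \<partial>Om) = (\<integral>y. indicator {p..q} y \<partial>Om) * c"
    by simp
  also have "(\<integral>y. indicator {p..q} y \<partial>Om) = measure Om ({p..q} \<inter> {0<..<1})"
    by simp
  also have "{p..q} \<inter> {0<..<1} = {p..q}" using assms by auto
  also have "measure Om {p..q} = measure lborel {p..q}"
    by (rule measure_restrict_space) (use assms in auto)
  finally show ?thesis using assms by simp
qed

lemma Om_const: "(\<integral>y. c \<partial>Om) = c" for c :: real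
proof -
  have "measure Om {0<..<1} = measure lborel {0<..<1::real}"
    by (rule measure_restrict_space) auto
  then show ?thesis by (simp add: lebesgue_integral_const)
qed

lemma Om_ind:
  assumes "S \<subseteq> {0<..<1}" "S \<in> sets borel"
  shows "(\<integral>y. indicator S y * c \<partial>Om) = c * measure lborel S"
proof -
  have "(\<integral>y. indicator S y * c \<partial>Om) = (\<integral>y. indicator S y \<partial>Om) * c"
    by simp
  also have "(\<integral>y. indicator S y \<partial>Om) = measure Om (S \<inter> {0<..<1})"
    by simp
  also have "S \<inter> {0<..<1} = S" using assms by auto
  also have "measure Om S = measure lborel S"
    by (rule measure_restrict_space) (use assms in auto)
  finally show ?thesis by simp
qed

lemma Om_to_lborel: "(\<integral>y. f y \<partial>Om) = (\<integral>y. indicator {0<..<1} y * f y \<partial>lborel)" for f :: "real \<Rightarrow> real"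
  by (subst integral_restrict_space) auto

definition ok :: "(real \<Rightarrow> real) \<Rightarrow> bool" where
  "ok g \<longleftrightarrow> g \<in> borel_measurable borel \<and> integrable Om (\<lambda>y. (g y)^2)"

definition bm :: "(real \<Rightarrow> real) \<Rightarrow> bool" where
  "bm g \<longleftrightarrow> g \<in> borel_measurable borel \<and> (\<exists>B. \<forall>y\<in>{0<..<1}. \<bar>g y\<bar> \<le> B)"

lemma abs_le_1_sq: "\<bar>t\<bar> \<le> 1 + t^2" for t :: real
proof (cases "\<bar>t\<bar> \<le> 1")
  case True then show ?thesis by (simp add: add_increasing2)
next
  case False
  then have "\<bar>t\<bar> * 1 \<le> \<bar>t\<bar> * \<bar>t\<bar>" by (intro mult_left_mono) auto
  also have "\<bar>t\<bar> * \<bar>t\<bar> = t^2" by (simp add: power2_eq_square abs_mult_self_eq)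
  finally show ?thesis by simp
qed

lemma sq_sum_le: "(p + q)^2 \<le> 2*p^2 + 2*q^2" for p q :: real
proof -
  have "2*p^2 + 2*q^2 - (p+q)^2 = (p-q)^2" by (simp add: power2_eq_square algebra_simps)
  moreover have "(p-q)^2 \<ge> 0" by simp
  ultimately show ?thesis by linarith
qed

lemma ok_int: assumes "ok g" shows "integrable Om g"
proof (rule Bochner_Integration.integrable_bound)
  have "integrable Om (\<lambda>y. 1::real)" by (rule Om_integrable_bound[where B=1]) auto
  then show "integrable Om (\<lambda>y. 1 + (g y)^2)" using assms by (auto simp: ok_def)
  show "g \<in> borel_measurable Om" using assms by (auto simp: ok_def intro: measurable_restrict_space1)
  show "AE x in Om. norm (g x) \<le> norm (1 + (g x)^2)"
    using abs_le_1_sq by (intro always_eventually allI) simp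
qed

lemma bm_ok: assumes "bm g" shows "ok g"
proof -
  obtain B where B: "\<forall>y\<in>{0<..<1}. \<bar>g y\<bar> \<le> B" and m: "g \<in> borel_measurable borel" using assms by (auto simp: bm_def)
  have "integrable Om (\<lambda>y. (g y)^2)"
  proof (rule Om_integrable_bound[where B="B^2"])
    fix y :: real assume "y \<in> {0<..<1}"
    then have "\<bar>g y\<bar> \<le> B" using B by auto
    then have "\<bar>g y\<bar>^2 \<le> B^2" by (intro power_mono) auto
    then show "\<bar>(g y)^2\<bar> \<le> B^2" by simp
  qed (use m in measurable)
  then show ?thesis using m by (simp add: ok_def)
qed

lemma ok_add: assumes "ok g" "ok h" shows "ok (\<lambda>y. g y + h y)"
proof -
  have "integrable Om (\<lambda>y. (g y + h y)^2)"
  proof (rule Bochner_Integration.integrable_bound)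
    show "integrable Om (\<lambda>y. 2 * (g y)^2 + 2 * (h y)^2)" using assms by (auto simp: ok_def)
    show "(\<lambda>y. (g y + h y)^2) \<in> borel_measurable Om" using assms by (auto simp: ok_def intro: measurable_restrict_space1)
    show "AE x in Om. norm ((g x + h x)^2) \<le> norm (2 * (g x)^2 + 2 * (h x)^2)"
      using sq_sum_le by (intro always_eventually allI) simp
  qed
  then show ?thesis using assms by (auto simp: ok_def)
qed

lemma ok_cmult: assumes "ok g" shows "ok (\<lambda>y. c * g y)"
  using assms by (auto simp: ok_def power_mult_distrib)

lemma ok_diff: assumes "ok g" "ok h" shows "ok (\<lambda>y. g y - h y)"
  using ok_add[OF assms(1) ok_cmult[OF assms(2), of "-1"]] by simp

lemma bm_const: "bm (\<lambda>_. c)" by (auto simp: bm_def)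

locale PS =
  fixes w :: "real \<Rightarrow> real" and \<delta> :: real
  assumes A1: "A1 w" and dpos: "0 < \<delta>" and dlt: "\<delta> < 1/2"
    and A2: "\<forall>x\<in>{0<..<1}. a_d w \<delta> x \<ge> (LINT y:{0<..<1}|lborel. wt_d w \<delta> x y)"
begin

lemma w_nonneg: "r \<ge> 0 \<Longrightarrow> w r \<ge> 0" using A1 by (auto simp: A1_def)
lemma w_cont: "continuous_on {0..<1} w" using A1 by (auto simp: A1_def)
lemma w_zero: "r \<ge> 1 \<Longrightarrow> w r = 0" using A1 by (auto simp: A1_def)
lemma w_pos: "0 < r \<Longrightarrow> r < 1 \<Longrightarrow> 0 < w r" using A1 by (auto simp: A1_def)
lemma w_mono: assumes "0 \<le> r" "r \<le> s" shows "w s \<le> w r"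
proof (cases "s < 1")
  case True then show ?thesis using A1 assms by (auto simp: A1_def)
next
  case False then show ?thesis using w_zero[of s] w_nonneg[of r] assms by auto
qed

lemma w_meas: "(\<lambda>r. w \<bar>r\<bar>) \<in> borel_measurable borel"
proof -
  have eq: "(\<lambda>r. w \<bar>r\<bar>) = (\<lambda>r. if r \<in> {-1<..<1} then w \<bar>r\<bar> else 0)"
    by (auto simp: w_zero fun_eq_iff)
  have c: "continuous_on {-1<..<1} (\<lambda>r. w \<bar>r\<bar>)"
    by (rule continuous_on_compose2[OF w_cont]) (auto intro!: continuous_intros)
  have "(\<lambda>r. if r \<in> {-1<..<1} then w \<bar>r\<bar> else 0) \<in> borel_measurable borel"
    by (rule borel_measurable_continuous_on_if[OF _ c]) (auto intro: continuous_on_const)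
  then show ?thesis using eq by simp
qed

abbreviation W where "W \<equiv> w_d w \<delta>"
abbreviation b where "b \<equiv> b_d w \<delta>"
abbreviation wt where "wt \<equiv> wt_d w \<delta>"
abbreviation a where "a \<equiv> a_d w \<delta>"

lemma W_eq: "W x y = w \<bar>(x - y) / \<delta>\<bar> / \<delta> ^ 3"
  using dpos by (simp add: w_d_def abs_divide)

lemma W_meas[measurable]: "(\<lambda>(x,y). W x y) \<in> borel_measurable (lborel \<Otimes>\<^sub>M lborel)"
  unfolding W_eq using w_meas by measurable

lemma W_meas1[measurable]: "W x \<in> borel_measurable borel"
  unfolding W_eq using w_meas by measurable

lemma W_nonneg: "W x y \<ge> 0" unfolding W_eq using dpos w_nonneg by simp

lemma W_le: "W x y \<le> w 0 / \<delta>^3"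
  unfolding W_eq using dpos w_mono[of 0 "\<bar>(x - y) / \<delta>\<bar>"] by (simp add: divide_right_mono)

lemma W_far: "\<bar>x - y\<bar> \<ge> \<delta> \<Longrightarrow> W x y = 0"
  unfolding W_eq using dpos by (simp add: w_zero abs_divide)

lemma W_lower: assumes "\<bar>x - y\<bar> \<le> c * \<delta>" "0 \<le> c" shows "W x y \<ge> w c / \<delta>^3"
proof -
  have "\<bar>(x - y) / \<delta>\<bar> \<le> c" using assms dpos by (simp add: abs_divide pos_divide_le_eq)
  then show ?thesis unfolding W_eq using dpos w_mono[of "\<bar>(x - y) / \<delta>\<bar>" c]
    by (simp add: divide_right_mono)
qed

lemma W_upper: assumes "\<bar>x - y\<bar> \<ge> c * \<delta>" "0 \<le> c" shows "W x y \<le> w c / \<delta>^3"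
proof -
  have "\<bar>(x - y) / \<delta>\<bar> \<ge> c" using assms dpos by (simp add: abs_divide pos_le_divide_eq)
  then show ?thesis unfolding W_eq using dpos w_mono[of c "\<bar>(x - y) / \<delta>\<bar>"] assms
    by (simp add: divide_right_mono)
qed

lemma W_sym: "W (1 - x) (1 - y) = W x y"
  unfolding W_eq by (simp add: abs_minus_commute)


lemma b_left_eq: assumes "0 < x" "x < \<delta>"
  shows "b x = 2 / (x + \<delta>)^2 * (\<integral>y. indicator {x-\<delta>..0} y * ((x - y) * W x y) \<partial>lborel)"
  using assms interval_integral_Icc[of "x-\<delta>" 0 "\<lambda>y. (x-y)*W x y"]
  by (simp add: b_d_def zero_ereal_def set_lebesgue_integral_def)

lemma b_right_eq: assumes "1 - \<delta> < x" "x < 1"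
  shows "b x = 2 / (1 - x + \<delta>)^2 * (\<integral>y. indicator {1..x+\<delta>} y * ((y - x) * W x y) \<partial>lborel)"
  using assms dlt interval_integral_Icc[of 1 "x+\<delta>" "\<lambda>y. (y-x)*W x y"]
  by (simp add: b_d_def one_ereal_def set_lebesgue_integral_def)

lemma b_else: "\<not>(0 < x \<and> x < \<delta>) \<Longrightarrow> \<not>(1 - \<delta> < x \<and> x < 1) \<Longrightarrow> b x = 0"
  by (auto simp: b_d_def)

lemma b_meas[measurable]: "b \<in> borel_measurable borel"
proof -
  have eq: "b = (\<lambda>x. if 0 < x \<and> x < \<delta> then 2 / (x + \<delta>)^2 * (\<integral>y. indicator {x-\<delta>..0} y * ((x - y) * W x y) \<partial>lborel)
     else if 1 - \<delta> < x \<and> x < 1 then 2 / (1 - x + \<delta>)^2 * (\<integral>y. indicator {1..x+\<delta>} y * ((y - x) * W x y) \<partial>lborel) else 0)"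
    using b_left_eq b_right_eq b_else by (auto simp: fun_eq_iff)
  have m1: "(\<lambda>x. \<integral>y. indicator {x-\<delta>..0} y * ((x - y) * W x y) \<partial>lborel) \<in> borel_measurable lborel"
    by (rule lborel.borel_measurable_lebesgue_integral) (simp add: indicator_def, measurable)
  have m2: "(\<lambda>x. \<integral>y. indicator {1..x+\<delta>} y * ((y - x) * W x y) \<partial>lborel) \<in> borel_measurable lborel"
    by (rule lborel.borel_measurable_lebesgue_integral) (simp add: indicator_def, measurable)
  show ?thesis unfolding eq using m1 m2 by measurable
qed


lemma tW_bound: assumes "0 \<le> t" "t \<le> \<delta>" shows "\<bar>t * W x y\<bar> \<le> \<delta> * (w 0 / \<delta>^3)"
proof -
  have "t * W x y \<le> \<delta> * (w 0 / \<delta>^3)"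
    using assms W_nonneg[of x y] W_le[of x y] dpos by (intro mult_mono) auto
  then show ?thesis using assms W_nonneg[of x y] by (simp add: abs_mult)
qed

lemma b_left_upper: assumes "0 < x" "x < \<delta>"
  shows "b x \<le> w (x/\<delta>) / \<delta>^3 * ((\<delta> - x) / (\<delta> + x))"
proof -
  let ?K = "w (x/\<delta>) / \<delta>^3"
  have "(\<integral>y. indicator {x-\<delta>..0} y * ((x - y) * W x y) \<partial>lborel)
      \<le> (\<integral>y. indicator {x-\<delta>..0} y * ((x - y) * ?K) \<partial>lborel)"
  proof (rule int_ind_mono[where B="\<delta> * (w 0 / \<delta>^3)" and B'="\<bar>\<delta> * ?K\<bar>"])
    fix y assume y: "y \<in> {x-\<delta>..0}"
    then have xy: "0 \<le> x - y" "x - y \<le> \<delta>" using assms by auto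
    show "\<bar>(x - y) * W x y\<bar> \<le> \<delta> * (w 0 / \<delta>^3)"
      using tW_bound[OF xy] by simp
    show "\<bar>(x - y) * ?K\<bar> \<le> \<bar>\<delta> * ?K\<bar>"
      unfolding abs_mult using xy by (intro mult_right_mono) auto
    have "W x y \<le> ?K" using W_upper[of "x/\<delta>" x y] xy y assms dpos by simp
    then show "(x - y) * W x y \<le> (x - y) * ?K" by (rule mult_left_mono) (use xy in auto)
  qed measurable
  also have "\<dots> = ?K * (x*(0-(x-\<delta>)) - (0^2-(x-\<delta>)^2)/2)"
    by (rule int_lin_K) (use assms in auto)
  also have "x*(0-(x-\<delta>)) - (0^2-(x-\<delta>)^2)/2 = (\<delta>^2 - x^2)/2"
    by (simp add: power2_eq_square field_simps)
  finally have I: "(\<integral>y. indicator {x-\<delta>..0} y * ((x - y) * W x y) \<partial>lborel) \<le> ?K * ((\<delta>^2 - x^2)/2)" .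
  have "b x \<le> 2 / (x + \<delta>)^2 * (?K * ((\<delta>^2 - x^2)/2))"
    unfolding b_left_eq[OF assms] using I by (rule mult_left_mono) simp
  also have "\<dots> = ?K * ((\<delta> - x) * (\<delta> + x)) / ((\<delta> + x) * (\<delta> + x))"
  proof -
    have e1: "\<delta>^2 - x^2 = (\<delta> - x) * (\<delta> + x)" by (simp add: power2_eq_square algebra_simps)
    have e2: "(x + \<delta>)^2 = (\<delta> + x) * (\<delta> + x)" by (simp add: power2_eq_square algebra_simps)
    show ?thesis unfolding e1 e2 by simp
  qed
  also have "\<dots> = ?K * ((\<delta> - x) / (\<delta> + x))"
    using assms dpos by simp
  finally show ?thesis .
qed

lemma b_left_lower: assumes "0 < x" "x \<le> 3*\<delta>/4"
  shows "b x \<ge> w (7/8) / (256 * \<delta>^3)"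
proof -
  let ?K = "w (7/8) / \<delta>^3"
  have x\<delta>: "x < \<delta>" using assms dpos by simp
  have "(\<integral>y. indicator {-\<delta>/8..0} y * ((0 - y) * ?K) \<partial>lborel)
      \<le> (\<integral>y. indicator {x-\<delta>..0} y * ((x - y) * W x y) \<partial>lborel)"
  proof (rule integral_mono)
    show "integrable lborel (\<lambda>y. indicator {-\<delta>/8..0} y * ((0 - y) * ?K))"
    proof (rule int_Icc_bound[where B="\<delta> * \<bar>?K\<bar>"])
      fix y assume "y \<in> {-\<delta>/8..0}"
      then have "\<bar>0 - y\<bar> \<le> \<delta>" using dpos by auto
      then show "\<bar>(0 - y) * ?K\<bar> \<le> \<delta> * \<bar>?K\<bar>" unfolding abs_mult by (rule mult_right_mono) simp
    qed measurable
    show "integrable lborel (\<lambda>y. indicator {x-\<delta>..0} y * ((x - y) * W x y))"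
    proof (rule int_Icc_bound[where B="\<delta> * (w 0 / \<delta>^3)"])
      fix y assume y: "y \<in> {x-\<delta>..0}"
      then have xy: "0 \<le> x - y" "x - y \<le> \<delta>" using assms by auto
      show "\<bar>(x - y) * W x y\<bar> \<le> \<delta> * (w 0 / \<delta>^3)"
        using tW_bound[OF xy] by simp
    qed measurable
    fix y
    show "indicator {-\<delta>/8..0} y * ((0 - y) * ?K) \<le> indicator {x-\<delta>..0} y * ((x - y) * W x y)"
    proof (cases "y \<in> {-\<delta>/8..0}")
      case True
      then have xy: "0 \<le> -y" "-y \<le> x - y" "\<bar>x - y\<bar> \<le> 7/8 * \<delta>" using assms by auto
      have "y \<in> {x-\<delta>..0}" using True assms by auto
      moreover have "W x y \<ge> ?K" using W_lower[OF xy(3)] by simp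
      moreover have "?K \<ge> 0" using w_nonneg[of "7/8"] dpos by simp
      ultimately have "(0 - y) * ?K \<le> (x - y) * W x y" using xy by (intro mult_mono) auto
      then show ?thesis using True \<open>y \<in> {x-\<delta>..0}\<close> by simp
    next
      case False
      then show ?thesis using W_nonneg[of x y] assms by (auto split: split_indicator intro!: mult_nonneg_nonneg)
    qed
  qed
  also have "\<dots> = (b x) * ((x + \<delta>)^2 / 2)"
    unfolding b_left_eq[OF assms(1) x\<delta>] using assms dpos by (simp add: field_simps)
  finally have I: "?K * (\<delta>^2/128) \<le> b x * ((x + \<delta>)^2 / 2)"
    using dpos by (subst (asm) int_lin_K) (auto simp: power2_eq_square field_simps)
  have bnn: "b x \<ge> 0"
  proof -
    have "0 \<le> (\<integral>y. indicator {x-\<delta>..0} y * ((x - y) * W x y) \<partial>lborel)"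
      using W_nonneg assms by (intro integral_nonneg_AE always_eventually) (auto split: split_indicator)
    then show ?thesis unfolding b_left_eq[OF assms(1) x\<delta>] by simp
  qed
  have "b x * ((x + \<delta>)^2 / 2) \<le> b x * (2 * \<delta>^2)"
  proof (rule mult_left_mono[OF _ bnn])
    have "(x + \<delta>)^2 \<le> (2*\<delta>)^2" by (rule power_mono) (use x\<delta> assms in auto)
    then show "(x + \<delta>)^2 / 2 \<le> 2 * \<delta>^2" by (simp add: power2_eq_square)
  qed
  with I have J: "?K * (\<delta>^2/128) \<le> b x * (2 * \<delta>^2)" by linarith
  have "w (7/8) / (256 * \<delta>^3) = (?K * (\<delta>^2/128)) / (2*\<delta>^2)" using dpos by (simp add: field_simps)
  also have "\<dots> \<le> (b x * (2 * \<delta>^2)) / (2*\<delta>^2)" by (rule divide_right_mono[OF J]) simp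
  also have "\<dots> = b x" using dpos by simp
  finally show ?thesis .
qed


lemma b_sym_left: assumes "0 < x" "x < \<delta>" shows "b (1 - x) = b x"
proof -
  have r: "1 - \<delta> < 1 - x" "1 - x < 1" using assms by auto
  have "(\<integral>y. indicator {1..(1-x)+\<delta>} y * ((y - (1-x)) * W (1-x) y) \<partial>lborel)
     = (\<integral>y. indicator {1..(1-x)+\<delta>} (1 - y) * (((1 - y) - (1-x)) * W (1-x) (1 - y)) \<partial>lborel)"
    by (rule lborel_reflect)
  also have "\<dots> = (\<integral>y. indicator {x-\<delta>..0} y * ((x - y) * W x y) \<partial>lborel)"
    by (intro Bochner_Integration.integral_cong) (auto split: split_indicator simp: W_sym[of x])
  finally show ?thesis
    unfolding b_right_eq[OF r] b_left_eq[OF assms] by simp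
qed

lemma b_sym: "b (1 - x) = b x"
proof -
  consider "0 < x \<and> x < \<delta>" | "1 - \<delta> < x \<and> x < 1" | "\<not>(0 < x \<and> x < \<delta>) \<and> \<not>(1 - \<delta> < x \<and> x < 1)" by blast
  then show ?thesis
  proof cases
    case 1 then show ?thesis using b_sym_left by auto
  next
    case 2 then show ?thesis using b_sym_left[of "1 - x"] by auto
  next
    case 3 then show ?thesis using b_else[of x] b_else[of "1 - x"] by auto
  qed
qed

lemma b_left_nonneg: assumes "0 < x" "x < \<delta>" shows "b x \<ge> 0"
proof -
  have "0 \<le> (\<integral>y. indicator {x-\<delta>..0} y * ((x - y) * W x y) \<partial>lborel)"
    using W_nonneg assms by (intro integral_nonneg_AE always_eventually) (auto split: split_indicator)
  then show ?thesis unfolding b_left_eq[OF assms] by simp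
qed

lemma b_nonneg: "b x \<ge> 0"
proof -
  consider "0 < x \<and> x < \<delta>" | "1 - \<delta> < x \<and> x < 1" | "\<not>(0 < x \<and> x < \<delta>) \<and> \<not>(1 - \<delta> < x \<and> x < 1)" by blast
  then show ?thesis
  proof cases
    case 1 then show ?thesis using b_left_nonneg by auto
  next
    case 2 then show ?thesis using b_left_nonneg[of "1 - x"] b_sym[of x] by auto
  next
    case 3 then show ?thesis using b_else[of x] by auto
  qed
qed

lemma b_left_le: assumes "0 < x" "x < \<delta>" shows "b x \<le> w 0 / \<delta>^3"
proof -
  have "w (x/\<delta>) / \<delta>^3 * ((\<delta> - x) / (\<delta> + x)) \<le> w 0 / \<delta>^3 * 1"
  proof (rule mult_mono)
    show "w (x/\<delta>) / \<delta>^3 \<le> w 0 / \<delta>^3" using w_mono[of 0 "x/\<delta>"] assms dpos by (simp add: divide_right_mono)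
    show "(\<delta> - x) / (\<delta> + x) \<le> 1" using assms by simp
    show "0 \<le> w 0 / \<delta>^3" using w_nonneg[of 0] dpos by simp
    show "0 \<le> (\<delta> - x) / (\<delta> + x)" using assms by simp
  qed
  then show ?thesis using b_left_upper[OF assms] by simp
qed

lemma b_le: "b x \<le> w 0 / \<delta>^3"
proof -
  consider "0 < x \<and> x < \<delta>" | "1 - \<delta> < x \<and> x < 1" | "\<not>(0 < x \<and> x < \<delta>) \<and> \<not>(1 - \<delta> < x \<and> x < 1)" by blast
  then show ?thesis
  proof cases
    case 1 then show ?thesis using b_left_le by auto
  next
    case 2 then show ?thesis using b_left_le[of "1 - x"] b_sym[of x] by auto
  next
    case 3 then show ?thesis using b_else[of x] w_nonneg[of 0] dpos by auto
  qed
qed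

lemma wt_eq: "wt x y = \<bar>W x y - b x * indicator {0<..<\<delta>} \<bar>y - x\<bar>\<bar>"
  by (simp add: wt_d_def)

lemma wt_meas[measurable]: "(\<lambda>(x,y). wt x y) \<in> borel_measurable (lborel \<Otimes>\<^sub>M lborel)"
  unfolding wt_eq indicator_def by measurable

lemma wt_meas1[measurable]: "wt x \<in> borel_measurable borel"
  unfolding wt_eq indicator_def by measurable

lemma wt_nonneg: "wt x y \<ge> 0" by (simp add: wt_eq)

lemma wt_le: "wt x y \<le> 2 * w 0 / \<delta>^3"
  using W_nonneg[of x y] W_le[of x y] b_nonneg[of x] b_le[of x]
  by (auto simp: wt_eq split: split_indicator)

lemma wt_sym: "wt (1 - x) (1 - y) = wt x y"
  by (simp add: wt_eq W_sym b_sym abs_minus_commute)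

lemma a_eq: "a x = (\<integral>y. W x y \<partial>Om)"
  by (simp add: a_d_def set_int_Om)

lemma a_sym: "a (1 - x) = a x"
  unfolding a_eq by (subst Om_reflect) (simp add: W_sym[of x, simplified])


lemma a_le: "a x \<le> w 0 / \<delta>^3"
proof -
  have "a x \<le> (\<integral>y. w 0 / \<delta>^3 \<partial>Om)"
    unfolding a_eq
    by (rule Om_mono[where B="w 0 / \<delta>^3" and B'="\<bar>w 0 / \<delta>^3\<bar>"]) (auto simp: W_nonneg W_le)
  then show ?thesis unfolding Om_const .
qed

lemma a_lower_half: assumes "0 < x" "x \<le> 1/2" shows "a x \<ge> w (1/2) / \<delta>^3 * (\<delta>/2)"
proof -
  have "(\<integral>y. indicator {x..x+\<delta>/2} y * (w (1/2) / \<delta>^3) \<partial>Om) \<le> a x"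
    unfolding a_eq
  proof (rule Om_mono[where B="\<bar>w (1/2) / \<delta>^3\<bar>" and B'="w 0 / \<delta>^3"])
    fix y :: real assume "y \<in> {0<..<1}"
    show "indicator {x..x+\<delta>/2} y * (w (1/2) / \<delta>^3) \<le> W x y"
    proof (cases "y \<in> {x..x+\<delta>/2}")
      case True
      then have "\<bar>x - y\<bar> \<le> 1/2 * \<delta>" by auto
      then show ?thesis using W_lower[of x y "1/2"] True by simp
    qed (simp add: W_nonneg)
  qed (auto simp: W_nonneg W_le split: split_indicator)
  also have "(\<integral>y. indicator {x..x+\<delta>/2} y * (w (1/2) / \<delta>^3) \<partial>Om) = w (1/2) / \<delta>^3 * (\<delta>/2)"
    using assms dpos dlt by (subst Om_ind_Icc) auto
  finally show ?thesis by simp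
qed

definition amin where "amin = w (1/2) / \<delta>^3 * (\<delta>/2)"

lemma amin_pos: "amin > 0" using w_pos[of "1/2"] dpos by (simp add: amin_def)

lemma a_lower: assumes "0 < x" "x < 1" shows "a x \<ge> amin"
proof (cases "x \<le> 1/2")
  case True then show ?thesis using a_lower_half[of x] assms by (simp add: amin_def)
next
  case False then show ?thesis using a_lower_half[of "1 - x"] a_sym[of x] assms by (simp add: amin_def)
qed


definition dd where "dd x = a x - (\<integral>y. wt x y \<partial>Om)"

lemma dd_nonneg: "0 < x \<Longrightarrow> x < 1 \<Longrightarrow> dd x \<ge> 0"
  using A2 by (auto simp: dd_def set_int_Om)

lemma W_int: "integrable Om (W x)"
  by (rule Om_integrable_bound[where B="w 0/\<delta>^3"]) (auto simp: W_nonneg W_le)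

lemma wt_int: "integrable Om (wt x)"
  by (rule Om_integrable_bound[where B="2*w 0/\<delta>^3"]) (auto simp: wt_nonneg wt_le)

lemma dd_eq: "dd x = (\<integral>y. W x y - wt x y \<partial>Om)"
  unfolding dd_def a_eq by (simp add: Bochner_Integration.integral_diff[OF W_int wt_int])

definition c0 where "c0 = w (7/8) / (256 * \<delta>^3)"

lemma c0_pos: "c0 > 0" using w_pos[of "7/8"] dpos by (simp add: c0_def)

lemma dd_seed: assumes "\<delta>/2 \<le> x" "x \<le> 3*\<delta>/4" shows "dd x \<ge> c0 * (\<delta>/2)"
proof -
  have x0: "0 < x" "x < \<delta>" using assms dpos by auto
  let ?b = "b x"
  have bnn: "?b \<ge> 0" by (rule b_nonneg)
  have bup: "?b \<le> w (x/\<delta>) / \<delta>^3"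
  proof -
    have "(\<delta> - x) / (\<delta> + x) \<le> 1" using x0 by simp
    moreover have "w (x/\<delta>) / \<delta>^3 \<ge> 0" using w_nonneg[of "x/\<delta>"] x0 dpos by simp
    ultimately show ?thesis using b_left_upper[OF x0] by (metis mult_left_mono mult.right_neutral order_trans)
  qed
  define g where "g y = indicator {0<..<x} y * ?b + indicator {x<..<2*x} y * ?b - indicator {2*x..x+\<delta>} y * ?b" for y
  have sub: "x + \<delta> < 1" using assms dlt by simp
  have "(\<integral>y. g y \<partial>Om) \<le> dd x"
    unfolding dd_eq
  proof (rule Om_mono[where B="3*?b" and B'="w 0/\<delta>^3 + 2*w 0/\<delta>^3"])
    show "g \<in> borel_measurable borel" unfolding g_def by measurable
    show "\<bar>g y\<bar> \<le> 3 * ?b" for y using bnn unfolding g_def by (auto split: split_indicator)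
    show "\<bar>W x y - wt x y\<bar> \<le> w 0/\<delta>^3 + 2*w 0/\<delta>^3" for y
      using W_nonneg[of x y] W_le[of x y] wt_nonneg[of x y] wt_le[of x y] by linarith
    fix y :: real assume y: "y \<in> {0<..<1}"
    show "g y \<le> W x y - wt x y"
    proof -
      consider "y < x" | "y = x" | "x < y \<and> y < 2*x" | "2*x \<le> y \<and> y \<le> x + \<delta>" | "x + \<delta> < y" by linarith
      then show ?thesis
      proof cases
        case 1
        have ind: "indicator {0<..<\<delta>} \<bar>y - x\<bar> = (1::real)" using 1 y x0 by auto
        have "W x y \<ge> w (x/\<delta>) / \<delta>^3" using W_lower[of x y "x/\<delta>"] 1 y x0 dpos by simp
        then have "wt x y = W x y - ?b" using bup unfolding wt_eq ind by simp
        then show ?thesis using 1 y unfolding g_def by simp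
      next
        case 2 then show ?thesis unfolding g_def using x0 W_nonneg[of x x] by (simp add: wt_eq)
      next
        case 3
        have ind: "indicator {0<..<\<delta>} \<bar>y - x\<bar> = (1::real)" using 3 y x0 by auto
        have "W x y \<ge> w (x/\<delta>) / \<delta>^3" using W_lower[of x y "x/\<delta>"] 3 x0 dpos by simp
        then have "wt x y = W x y - ?b" using bup unfolding wt_eq ind by simp
        then show ?thesis using 3 y unfolding g_def by simp
      next
        case 4
        have "wt x y \<le> W x y + ?b" using W_nonneg[of x y] bnn
          unfolding wt_eq by (auto split: split_indicator)
        then show ?thesis using 4 x0 unfolding g_def by simp
      next
        case 5
        have "W x y = 0" using W_far[of x y] 5 by simp
        moreover have "indicator {0<..<\<delta>} \<bar>y - x\<bar> = (0::real)" using 5 by (auto simp: indicator_def)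
        ultimately have "wt x y = 0" by (simp add: wt_eq)
        then show ?thesis using 5 x0 \<open>W x y = 0\<close> unfolding g_def by simp
      qed
    qed
  qed (measurable)
  moreover have "(\<integral>y. g y \<partial>Om) = ?b * x + ?b * x - ?b * (\<delta> - x)"
  proof -
    have i1: "integrable Om (\<lambda>y. indicator S y * ?b)" if "S \<in> sets borel" for S :: "real set"
      by (rule Om_integrable_bound[where B="?b"]) (use bnn that in \<open>auto split: split_indicator\<close>)
    note i1[of "{0<..<x}", simplified] i1[of "{x<..<2*x}", simplified] i1[of "{2*x..x+\<delta>}", simplified]
    have e: "(\<integral>y. g y \<partial>Om) = (\<integral>y. indicator {0<..<x} y * ?b \<partial>Om) + (\<integral>y. indicator {x<..<2*x} y * ?b \<partial>Om)
       - (\<integral>y. indicator {2*x..x+\<delta>} y * ?b \<partial>Om)"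
      unfolding g_def by (simp add: Bochner_Integration.integral_diff Bochner_Integration.integral_add i1[of "{0<..<x}", simplified] i1[of "{x<..<2*x}", simplified] i1[of "{2*x..x+\<delta>}", simplified])
    have e1: "(\<integral>y. indicator {0<..<x} y * ?b \<partial>Om) = ?b * x" by (subst Om_ind) (use x0 sub dpos in auto)
    have e2: "(\<integral>y. indicator {x<..<2*x} y * ?b \<partial>Om) = ?b * x" by (subst Om_ind) (use x0 sub in auto)
    have e3: "(\<integral>y. indicator {2*x..x+\<delta>} y * ?b \<partial>Om) = ?b * (\<delta> - x)" by (subst Om_ind) (use x0 sub in auto)
    show ?thesis unfolding e e1 e2 e3 ..
  qed
  ultimately have "?b * (3*x - \<delta>) \<le> dd x" by (simp add: algebra_simps)
  moreover have "c0 * (\<delta>/2) \<le> ?b * (3*x - \<delta>)"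
    using b_left_lower[of x] assms x0 c0_pos by (intro mult_mono) (auto simp: c0_def)
  ultimately show ?thesis by linarith
qed


definition GG where "GG x = (\<integral>y. indicator {x+\<delta>/2..<x+\<delta>} y * wt x y \<partial>Om)"

lemma ind_wt_int: "S \<in> sets borel \<Longrightarrow> integrable Om (\<lambda>y. indicator S y * wt x y)"
  by (rule Om_integrable_bound[where B="2*w 0/\<delta>^3"]) (use w_nonneg[of 0] dpos in \<open>auto simp: wt_nonneg wt_le split: split_indicator\<close>)

lemma GG_nonneg: "GG x \<ge> 0"
  unfolding GG_def by (intro integral_nonneg_AE always_eventually) (auto simp: wt_nonneg)

lemma layer_gain: assumes "0 < x" "x < \<delta>/2" shows "dd x + 2 * GG x \<ge> b x * (\<delta>/2)"
proof -
  let ?b = "b x" and ?S = "{x+\<delta>/2..<x+\<delta>}"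
  have x0: "0 < x" "x < \<delta>" using assms dpos by auto
  have bnn: "?b \<ge> 0" by (rule b_nonneg)
  have sub: "x + \<delta> < 1" using assms dlt by simp
  have RHS: "(\<integral>y. indicator ?S y * ?b \<partial>Om) = ?b * (\<delta>/2)"
    by (subst Om_ind) (use x0 sub in auto)
  have Sind: "indicator {0<..<\<delta>} \<bar>y - x\<bar> = (1::real)" if "y \<in> ?S" for y
    using that dpos by (auto simp: indicator_def)
  have Sfar: "\<bar>x - y\<bar> \<ge> 1/2 * \<delta>" if "y \<in> ?S" for y using that by auto
  show ?thesis
  proof (cases "w (1/2) / \<delta>^3 \<ge> ?b / 2")
    case True
    have "(\<integral>y. indicator ?S y * ?b \<partial>Om) \<le> (\<integral>y. W x y - wt x y + 2 * (indicator ?S y * wt x y) \<partial>Om)"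
    proof (rule Om_mono[where B="?b" and B'="w 0/\<delta>^3 + 2*w 0/\<delta>^3 + 2 * (2*w 0/\<delta>^3)"])
      show "\<bar>indicator ?S y * ?b\<bar> \<le> ?b" for y using bnn by (auto split: split_indicator)
      show "\<bar>W x y - wt x y + 2 * (indicator ?S y * wt x y)\<bar> \<le> w 0/\<delta>^3 + 2*w 0/\<delta>^3 + 2 * (2*w 0/\<delta>^3)" for y
        using W_nonneg[of x y] W_le[of x y] wt_nonneg[of x y] wt_le[of x y] by (auto split: split_indicator)
      fix y :: real assume y: "y \<in> {0<..<1}"
      consider "y \<in> ?S" | "y = x" | "y \<noteq> x \<and> y < x + \<delta>/2" | "x + \<delta> \<le> y" by fastforce
      then show "indicator ?S y * ?b \<le> W x y - wt x y + 2 * (indicator ?S y * wt x y)"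
      proof cases
        case 1
        have "wt x y = \<bar>W x y - ?b\<bar>" unfolding wt_eq Sind[OF 1] by simp
        then show ?thesis using 1 W_nonneg[of x y] by auto
      next
        case 2 then show ?thesis using W_nonneg[of x x] x0 by (simp add: wt_eq indicator_def)
      next
        case 3
        have nS: "y \<notin> ?S" using 3 by auto
        have ind: "indicator {0<..<\<delta>} \<bar>y - x\<bar> = (1::real)" using 3 y x0 assms by (auto simp: indicator_def)
        have "\<bar>x - y\<bar> \<le> 1/2 * \<delta>" using 3 y assms by (auto simp: abs_if)
        then have "W x y \<ge> w (1/2) / \<delta>^3" using W_lower[of x y "1/2"] by simp
        then have "?b \<le> 2 * W x y" using True by linarith
        then have "wt x y \<le> W x y" using bnn unfolding wt_eq ind by (simp add: abs_le_iff)
        then show ?thesis using nS by simp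
      next
        case 4
        have nS: "y \<notin> ?S" using 4 by auto
        have "W x y = 0" using W_far[of x y] 4 by simp
        moreover have "indicator {0<..<\<delta>} \<bar>y - x\<bar> = (0::real)" using 4 by (auto simp: indicator_def)
        ultimately have "wt x y = 0" by (simp add: wt_eq)
        then show ?thesis using nS \<open>W x y = 0\<close> by simp
      qed
    qed (measurable)
    also have "\<dots> = dd x + 2 * GG x"
      unfolding dd_eq GG_def
      by (simp add: Bochner_Integration.integral_diff Bochner_Integration.integral_add W_int wt_int ind_wt_int)
    finally show ?thesis unfolding RHS .
  next
    case False
    have "(\<integral>y. indicator ?S y * ?b \<partial>Om) \<le> (\<integral>y. 2 * (indicator ?S y * wt x y) \<partial>Om)"
    proof (rule Om_mono[where B="?b" and B'="2 * (2*w 0/\<delta>^3)"])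
      show "\<bar>indicator ?S y * ?b\<bar> \<le> ?b" for y using bnn by (auto split: split_indicator)
      show "\<bar>2 * (indicator ?S y * wt x y)\<bar> \<le> 2 * (2*w 0/\<delta>^3)" for y
        using wt_nonneg[of x y] wt_le[of x y] by (auto split: split_indicator)
      fix y :: real assume y: "y \<in> {0<..<1}"
      show "indicator ?S y * ?b \<le> 2 * (indicator ?S y * wt x y)"
      proof (cases "y \<in> ?S")
        case True
        have "W x y \<le> w (1/2) / \<delta>^3" using W_upper[OF Sfar[OF True]] by simp
        then have "W x y \<le> ?b" using False bnn by linarith
        then have "wt x y = ?b - W x y" unfolding wt_eq Sind[OF True] by simp
        moreover have "2 * W x y \<le> ?b" using False \<open>W x y \<le> w (1/2) / \<delta>^3\<close> by linarith
        ultimately show ?thesis using True by simp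
      qed simp
    qed (measurable)
    also have "\<dots> = 2 * GG x" unfolding GG_def by simp
    finally show ?thesis unfolding RHS using dd_nonneg[of x] x0 sub by simp
  qed
qed


end

context PS begin
definition \<kappa>0 where "\<kappa>0 = 2/3 * (w (1/2) / \<delta>^3)"

lemma wt_M_lower_half: assumes "\<delta>/2 \<le> x" "x \<le> 1/2" "\<bar>x - y\<bar> \<le> \<delta>/2"
  shows "wt x y \<ge> \<kappa>0"
proof -
  let ?K = "w (1/2) / \<delta>^3"
  have K0: "?K \<ge> 0" using w_nonneg[of "1/2"] dpos by simp
  have WK: "W x y \<ge> ?K" using W_lower[of x y "1/2"] assms by simp
  have kK: "\<kappa>0 \<le> ?K" using K0 by (simp add: \<kappa>0_def)
  show ?thesis
  proof (cases "x < \<delta>")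
    case False
    then have "b x = 0" using assms dlt by (intro b_else) auto
    then show ?thesis using WK kK W_nonneg[of x y] by (simp add: wt_eq)
  next
    case True
    have x0: "0 < x" using assms dpos by simp
    show ?thesis
    proof (cases "y = x")
      case True then show ?thesis using WK kK W_nonneg[of x y] by (simp add: wt_eq)
    next
      case False
      have ind: "indicator {0<..<\<delta>} \<bar>y - x\<bar> = (1::real)" using False assms dpos by (auto simp: indicator_def abs_minus_commute)
      have "w (x/\<delta>) \<le> w (1/2)" using w_mono[of "1/2" "x/\<delta>"] assms dpos by (simp add: field_simps)
      then have "w (x/\<delta>) / \<delta>^3 \<le> ?K" using dpos by (simp add: divide_right_mono)
      then have "w (x/\<delta>) / \<delta>^3 * ((\<delta> - x) / (\<delta> + x)) \<le> ?K * ((\<delta> - x) / (\<delta> + x))"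
        by (rule mult_right_mono) (use x0 True in simp)
      with b_left_upper[OF x0 True] have "b x \<le> ?K * ((\<delta> - x) / (\<delta> + x))" by linarith
      also have "\<dots> \<le> ?K * (1/3)"
      proof (rule mult_left_mono[OF _ K0])
        have "\<delta> - x \<le> 1/3 * (\<delta> + x)" using assms by simp
        then show "(\<delta> - x) / (\<delta> + x) \<le> 1/3" using x0 dpos by (simp add: pos_divide_le_eq)
      qed
      finally have "W x y - b x \<ge> \<kappa>0" using WK by (simp add: \<kappa>0_def)
      then show ?thesis unfolding wt_eq ind by simp
    qed
  qed
qed

lemma wt_M_lower: assumes "\<delta>/2 \<le> x" "x \<le> 1 - \<delta>/2" "\<bar>x - y\<bar> \<le> \<delta>/2"
  shows "wt x y \<ge> \<kappa>0"
proof (cases "x \<le> 1/2")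
  case True then show ?thesis using wt_M_lower_half assms by auto
next
  case False
  have "wt (1 - x) (1 - y) \<ge> \<kappa>0" using assms False by (intro wt_M_lower_half) (auto simp: abs_minus_commute)
  then show ?thesis by (simp add: wt_sym)
qed

definition Wm where "Wm = 2 * w 0 / \<delta>^3"

lemma Wm_nonneg: "Wm \<ge> 0" using w_nonneg[of 0] dpos by (simp add: Wm_def)

lemma wt_le_Wm: "wt x y \<le> Wm" using wt_le by (simp add: Wm_def)

lemma ok_wt_int: assumes "ok g" shows "integrable Om (\<lambda>y. wt x y * g y)"
proof (rule Bochner_Integration.integrable_bound)
  show "integrable Om (\<lambda>y. Wm * \<bar>g y\<bar>)" using ok_int[OF assms] by auto
  show "(\<lambda>y. wt x y * g y) \<in> borel_measurable Om" using assms
    by (auto simp: ok_def intro!: measurable_restrict_space1)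
  show "AE y in Om. norm (wt x y * g y) \<le> norm (Wm * \<bar>g y\<bar>)"
    using wt_le_Wm wt_nonneg Wm_nonneg
    by (intro always_eventually allI) (simp add: abs_mult mult_right_mono)
qed

definition Top :: "(real \<Rightarrow> real) \<Rightarrow> real \<Rightarrow> real" where
  "Top g x = (if x \<in> {0<..<1} then (\<integral>y. wt x y * g y \<partial>Om) / a x else 0)"

lemma a_meas[measurable]: "a \<in> borel_measurable borel"
proof -
  have "a = (\<lambda>x. \<integral>y. indicator {0<..<1} y * W x y \<partial>lborel)"
    by (simp add: fun_eq_iff a_eq Om_to_lborel)
  moreover have "(\<lambda>x. \<integral>y. indicator {0<..<1} y * W x y \<partial>lborel) \<in> borel_measurable lborel"
    by (rule lborel.borel_measurable_lebesgue_integral) (simp add: indicator_def, measurable)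
  ultimately show ?thesis by simp
qed

lemma Top_meas[measurable]: assumes [measurable]: "g \<in> borel_measurable borel" shows "Top g \<in> borel_measurable borel"
proof -
  have "(\<lambda>x. \<integral>y. indicator {0<..<1} y * (wt x y * g y) \<partial>lborel) \<in> borel_measurable lborel"
    by (rule lborel.borel_measurable_lebesgue_integral) (simp add: indicator_def, measurable)
  then have "(\<lambda>x. \<integral>y. wt x y * g y \<partial>Om) \<in> borel_measurable borel" by (simp add: Om_to_lborel)
  then show ?thesis unfolding Top_def[abs_def] by measurable
qed

lemma a_pos: "0 < x \<Longrightarrow> x < 1 \<Longrightarrow> a x > 0"
  using a_lower amin_pos by fastforce

definition amax where "amax = w 0 / \<delta>^3"

lemma a_le_amax: "a x \<le> amax" using a_le by (simp add: amax_def)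

lemma amin_le_amax: "amin \<le> amax" using a_lower[of "1/2"] a_le_amax[of "1/2"] by simp

lemma Top_bound: assumes "ok g" shows "\<bar>Top g x\<bar> \<le> Wm / amin * (\<integral>y. \<bar>g y\<bar> \<partial>Om)"
proof (cases "x \<in> {0<..<1}")
  case True
  have I0: "(\<integral>y. \<bar>g y\<bar> \<partial>Om) \<ge> 0" by simp
  have "\<bar>\<integral>y. wt x y * g y \<partial>Om\<bar> \<le> (\<integral>y. Wm * \<bar>g y\<bar> \<partial>Om)"
    using wt_le_Wm wt_nonneg Wm_nonneg ok_int[OF assms] ok_wt_int[OF assms]
    by (intro integral_abs_bound_integral) (auto simp: abs_mult mult_right_mono)
  also have "\<dots> = Wm * (\<integral>y. \<bar>g y\<bar> \<partial>Om)" by simp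
  finally have N: "\<bar>\<integral>y. wt x y * g y \<partial>Om\<bar> \<le> Wm * (\<integral>y. \<bar>g y\<bar> \<partial>Om)" .
  have ax: "a x \<ge> amin" using a_lower True by auto
  have "\<bar>Top g x\<bar> = \<bar>\<integral>y. wt x y * g y \<partial>Om\<bar> / a x"
    using True a_pos[of x] by (simp add: Top_def)
  also have "\<dots> \<le> Wm * (\<integral>y. \<bar>g y\<bar> \<partial>Om) / amin"
    using N ax amin_pos Wm_nonneg I0 by (intro frac_le) auto
  finally show ?thesis by simp
next
  case False then show ?thesis using Wm_nonneg amin_pos by (auto simp: Top_def)
qed

lemma Top_bm: assumes "ok g" shows "bm (Top g)"
  using Top_bound[OF assms] assms by (auto simp: bm_def ok_def)

lemma Top_add: assumes "ok g" "ok h" shows "Top (\<lambda>y. g y + h y) x = Top g x + Top h x"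
  using ok_wt_int[OF assms(1)] ok_wt_int[OF assms(2)]
  by (simp add: Top_def distrib_left add_divide_distrib)

lemma Top_cmult: "Top (\<lambda>y. c * g y) x = c * Top g x"
proof -
  have "(\<integral>y. wt x y * (c * g y) \<partial>Om) = c * (\<integral>y. wt x y * g y \<partial>Om)"
    by (subst integral_mult_right_zero[symmetric]) (simp add: ac_simps)
  then show ?thesis by (simp add: Top_def)
qed

lemma Top_diff: assumes "ok g" "ok h" shows "Top (\<lambda>y. g y - h y) x = Top g x - Top h x"
  using Top_add[OF assms(1) ok_cmult[OF assms(2), of "-1"]] Top_cmult[of "-1" h x] by simp

lemma Top_cong: assumes "\<And>y. y \<in> {0<..<1} \<Longrightarrow> g y = h y" shows "Top g x = Top h x"
proof -
  have "(\<integral>y. wt x y * g y \<partial>Om) = (\<integral>y. wt x y * h y \<partial>Om)"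
    by (rule Bochner_Integration.integral_cong) (use assms in auto)
  then show ?thesis by (simp add: Top_def)
qed

lemma Top_mono: assumes "ok g" "ok h" "\<And>y. y \<in> {0<..<1} \<Longrightarrow> g y \<le> h y" shows "Top g x \<le> Top h x"
proof (cases "x \<in> {0<..<1}")
  case True
  have "(\<integral>y. wt x y * g y \<partial>Om) \<le> (\<integral>y. wt x y * h y \<partial>Om)"
    using ok_wt_int[OF assms(1)] ok_wt_int[OF assms(2)] assms(3) wt_nonneg
    by (intro integral_mono) (auto intro: mult_left_mono)
  then show ?thesis using True a_pos[of x] by (simp add: Top_def divide_right_mono)
qed (auto simp: Top_def)

lemma ok_abs: assumes "ok g" shows "ok (\<lambda>y. \<bar>g y\<bar>)"
proof -
  have [measurable]: "g \<in> borel_measurable borel" using assms by (simp add: ok_def)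
  have "(\<lambda>y. \<bar>g y\<bar>) \<in> borel_measurable borel" by measurable
  then show ?thesis using assms by (simp add: ok_def)
qed

lemma Top_abs: assumes "ok g" shows "\<bar>Top g x\<bar> \<le> Top (\<lambda>y. \<bar>g y\<bar>) x"
proof -
  have "Top g x \<le> Top (\<lambda>y. \<bar>g y\<bar>) x" by (rule Top_mono[OF assms ok_abs[OF assms]]) simp
  moreover have "Top (\<lambda>y. -1 * g y) x \<le> Top (\<lambda>y. \<bar>g y\<bar>) x"
    by (rule Top_mono[OF ok_cmult[OF assms] ok_abs[OF assms]]) simp
  then have "- Top g x \<le> Top (\<lambda>y. \<bar>g y\<bar>) x" using Top_cmult[of "-1" g x] by simp
  ultimately show ?thesis by simp
qed

lemma Top_one: "Top (\<lambda>_. 1) x \<le> 1"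
proof (cases "x \<in> {0<..<1}")
  case True
  have "(\<integral>y. wt x y \<partial>Om) \<le> a x" using A2 True by (simp add: set_int_Om)
  then show ?thesis using True a_pos[of x] by (simp add: Top_def)
qed (auto simp: Top_def)

lemma Top_nonneg: assumes "ok g" "\<And>y. y \<in> {0<..<1} \<Longrightarrow> g y \<ge> 0" shows "Top g x \<ge> 0"
proof -
  have "Top (\<lambda>_. 0) x \<le> Top g x" by (rule Top_mono[OF bm_ok[OF bm_const] assms(1)]) (use assms(2) in auto)
  moreover have "Top (\<lambda>_. 0) x = 0" using Top_cmult[of 0 "\<lambda>_. 0" x] by simp
  ultimately show ?thesis by simp
qed

lemma Top_gain: assumes "0 < x" "x < 1" "ok g"
  shows "1 - Top g x = (dd x + (\<integral>y. wt x y * (1 - g y) \<partial>Om)) / a x"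
proof -
  have "(\<integral>y. wt x y * (1 - g y) \<partial>Om) = (\<integral>y. wt x y \<partial>Om) - (\<integral>y. wt x y * g y \<partial>Om)"
    using wt_int ok_wt_int[OF assms(3)] by (simp add: right_diff_distrib Bochner_Integration.integral_diff)
  then show ?thesis using assms a_pos[of x] by (simp add: Top_def dd_def field_simps)
qed

lemma Top_sym: "Top g (1 - x) = Top (\<lambda>y. g (1 - y)) x"
proof -
  have "(\<integral>y. wt (1 - x) y * g y \<partial>Om) = (\<integral>y. wt (1 - x) (1 - y) * g (1 - y) \<partial>Om)"
    by (rule Om_reflect)
  also have "\<dots> = (\<integral>y. wt x y * g (1 - y) \<partial>Om)" by (simp add: wt_sym)
  finally show ?thesis by (auto simp: Top_def a_sym)
qed

end

context PS begin

definition r where "r k = (Top ^^ k) (\<lambda>_. 1)"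

lemma r_0: "r 0 = (\<lambda>_. 1)" by (simp add: r_def)
lemma r_Suc: "r (Suc k) = Top (r k)" by (simp add: r_def)

lemma r_bm: "bm (r k)"
  by (induction k) (auto simp: r_0 r_Suc bm_const intro!: Top_bm bm_ok)

lemma r_ok: "ok (r k)" by (rule bm_ok[OF r_bm])

lemma r_bounds: "x \<in> {0<..<1} \<Longrightarrow> 0 \<le> r k x \<and> r k x \<le> 1"
proof (induction k arbitrary: x)
  case 0 then show ?case by (simp add: r_0)
next
  case (Suc k)
  have "Top (r k) x \<ge> 0" using Suc.IH by (intro Top_nonneg[OF r_ok]) auto
  moreover have "Top (r k) x \<le> Top (\<lambda>_. 1) x"
    using Suc.IH by (intro Top_mono[OF r_ok bm_ok[OF bm_const]]) auto
  ultimately show ?case using Top_one[of x] by (simp add: r_Suc)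
qed

lemma r_mono: "x \<in> {0<..<1} \<Longrightarrow> r (Suc k) x \<le> r k x"
proof (induction k arbitrary: x)
  case 0 then show ?case using r_bounds[of x 1] by (simp add: r_0)
next
  case (Suc k)
  have "r (Suc (Suc k)) x = Top (r (Suc k)) x" by (rule fun_cong[OF r_Suc])
  also have "\<dots> \<le> Top (r k) x" by (rule Top_mono[OF r_ok r_ok]) (use Suc.IH in auto)
  also have "\<dots> = r (Suc k) x" by (rule fun_cong[OF r_Suc, symmetric])
  finally show ?case .
qed

lemma r_sym: "r k (1 - x) = r k x"
proof (induction k arbitrary: x)
  case 0 then show ?case by (simp add: r_0)
next
  case (Suc k)
  have "r (Suc k) (1 - x) = Top (\<lambda>y. r k (1 - y)) x" by (simp add: r_Suc Top_sym)
  also have "(\<lambda>y. r k (1 - y)) = r k" using Suc.IH by auto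
  finally show ?case by (simp add: r_Suc)
qed

lemma r_gain: "x \<in> {0<..<1} \<Longrightarrow> 1 - r (Suc k) x = (dd x + (\<integral>y. wt x y * (1 - r k y) \<partial>Om)) / a x"
  using Top_gain[OF _ _ r_ok] by (simp add: r_Suc)

lemma r_meas[measurable]: "r k \<in> borel_measurable borel" using r_bm by (simp add: bm_def)

lemma int_wt_r_nonneg: "(\<integral>y. wt x y * (1 - r k y) \<partial>Om) \<ge> 0"
  using r_bounds wt_nonneg by (intro integral_nonneg_AE AE_I2) auto

lemma int_lower:
  assumes "0 < p" "p \<le> q" "q < 1" "0 \<le> \<eta>" "0 \<le> \<kappa>"
    "\<And>y. y \<in> {p..q} \<Longrightarrow> 1 - r k y \<ge> \<eta>" "\<And>y. y \<in> {p..q} \<Longrightarrow> wt x y \<ge> \<kappa>"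
  shows "(\<integral>y. wt x y * (1 - r k y) \<partial>Om) \<ge> \<kappa> * \<eta> * (q - p)"
proof -
  have "(\<integral>y. indicator {p..q} y * (\<kappa> * \<eta>) \<partial>Om) \<le> (\<integral>y. wt x y * (1 - r k y) \<partial>Om)"
  proof (rule Om_mono[where B="\<kappa> * \<eta>" and B'="Wm"])
    show "(\<lambda>y. wt x y * (1 - r k y)) \<in> borel_measurable borel" by measurable
    show "\<bar>indicator {p..q} y * (\<kappa> * \<eta>)\<bar> \<le> \<kappa> * \<eta>" for y using assms by (auto split: split_indicator)
    show "\<bar>wt x y * (1 - r k y)\<bar> \<le> Wm" if "y \<in> {0<..<1}" for y
    proof -
      have "0 \<le> 1 - r k y" "1 - r k y \<le> 1" using r_bounds[OF that] by auto
      then have "wt x y * (1 - r k y) \<le> Wm * 1" using wt_le_Wm[of x y] wt_nonneg[of x y]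
        by (intro mult_mono) auto
      then show ?thesis using \<open>0 \<le> 1 - r k y\<close> wt_nonneg[of x y] by simp
    qed
    fix y :: real assume y: "y \<in> {0<..<1}"
    show "indicator {p..q} y * (\<kappa> * \<eta>) \<le> wt x y * (1 - r k y)"
    proof (cases "y \<in> {p..q}")
      case True
      then have "\<kappa> * \<eta> \<le> wt x y * (1 - r k y)" using assms wt_nonneg[of x y] by (intro mult_mono) auto
      then show ?thesis using True by simp
    next
      case False then show ?thesis using r_bounds[OF y] wt_nonneg[of x y] by simp
    qed
  qed measurable
  also have "(\<integral>y. indicator {p..q} y * (\<kappa> * \<eta>) \<partial>Om) = \<kappa> * \<eta> * (q - p)"
    using assms by (subst Om_ind_Icc) auto
  finally show ?thesis .
qed


lemma w0_pos: "w 0 > 0" using w_pos[of "1/2"] w_mono[of 0 "1/2"] by simp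
lemma amax_pos: "amax > 0" using w0_pos dpos by (simp add: amax_def)
lemma \<kappa>0_pos: "\<kappa>0 > 0" using w_pos[of "1/2"] dpos by (simp add: \<kappa>0_def)

definition \<epsilon>1 where "\<epsilon>1 = c0 * (\<delta>/2) / amax"
definition q1 where "q1 = \<kappa>0 * (\<delta>/4) / amax"

lemma \<epsilon>1_pos: "\<epsilon>1 > 0" using c0_pos amax_pos dpos by (simp add: \<epsilon>1_def)
lemma q1_pos: "q1 > 0" using \<kappa>0_pos amax_pos dpos by (simp add: q1_def)
lemma q1_le1: "q1 \<le> 1"
proof -
  have h1: "w (1/2) / \<delta>^3 \<le> w 0 / \<delta>^3" using w_mono[of 0 "1/2"] dpos by (simp add: divide_right_mono)
  have h2: "w (1/2) / \<delta>^3 \<ge> 0" using w_nonneg[of "1/2"] dpos by simp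
  have "\<kappa>0 \<le> amax" unfolding \<kappa>0_def amax_def using h1 h2 by linarith
  moreover have "\<kappa>0 * (\<delta>/4) \<le> \<kappa>0" using \<kappa>0_pos dlt by (simp add: mult_left_le)
  ultimately show ?thesis using amax_pos by (simp add: q1_def)
qed

lemma propagate:
  assumes "\<delta>/2 \<le> x" "x \<le> 1 - \<delta>/2" "x \<le> 3*\<delta>/4 + real k * \<delta>/4"
  shows "1 - r (Suc k) x \<ge> \<epsilon>1 * q1^k"
  using assms
proof (induction k arbitrary: x)
  case 0
  have x01: "x \<in> {0<..<1}" using 0 dpos by auto
  have "1 - r (Suc 0) x = dd x / a x" using r_gain[OF x01, of 0] by (simp add: r_0)
  moreover have "c0 * (\<delta>/2) / amax \<le> dd x / a x"
    using dd_seed[of x] dd_nonneg[of x] 0 c0_pos dpos a_pos[of x] a_le_amax[of x] x01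
    by (intro frac_le) auto
  ultimately show ?case by (simp add: \<epsilon>1_def)
next
  case (Suc k)
  have x01: "x \<in> {0<..<1}" using Suc.prems dpos by auto
  show ?case
  proof (cases "x \<le> 3*\<delta>/4 + real k * \<delta>/4")
    case True
    have "\<epsilon>1 * q1^(Suc k) \<le> \<epsilon>1 * q1^k"
      using \<epsilon>1_pos q1_pos q1_le1 by (simp add: mult_left_le)
    also have "\<dots> \<le> 1 - r (Suc k) x" using Suc.IH[OF Suc.prems(1,2) True] .
    also have "\<dots> \<le> 1 - r (Suc (Suc k)) x" using r_mono[OF x01, of "Suc k"] by simp
    finally show ?thesis .
  next
    case False
    define m where "m = max (\<delta>/2) (x - \<delta>/2)"
    have m1: "\<delta>/2 \<le> m" "x - \<delta>/2 \<le> m" using m_def by auto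
    have m2: "m + \<delta>/4 \<le> x" "m + \<delta>/4 \<le> 1 - \<delta>/2" "m + \<delta>/4 \<le> 3*\<delta>/4 + real k * \<delta>/4"
    proof -
      have kd: "real k * \<delta> \<ge> 0" using dpos by simp
      have e: "3*\<delta>/4 + real (Suc k) * \<delta>/4 = 3*\<delta>/4 + real k * \<delta>/4 + \<delta>/4" by (simp add: field_simps)
      define t where "t = real k * \<delta>/4"
      have t0: "t \<ge> 0" using kd by (simp add: t_def)
      have p3: "x \<le> 3*\<delta>/4 + t + \<delta>/4" using Suc.prems(3)[unfolded e] by (simp add: t_def)
      have nF: "\<not> x \<le> 3*\<delta>/4 + t" using False by (simp add: t_def)
      show "m + \<delta>/4 \<le> x" "m + \<delta>/4 \<le> 1 - \<delta>/2" "m + \<delta>/4 \<le> 3*\<delta>/4 + real k * \<delta>/4"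
        unfolding t_def[symmetric] using nF Suc.prems(1,2) p3 dlt dpos t0 unfolding m_def max_def by auto
    qed
    have inJ: "1 - r (Suc k) y \<ge> \<epsilon>1 * q1^k" if "y \<in> {m..m+\<delta>/4}" for y
      using that m1 m2 by (intro Suc.IH) auto
    have wJ: "wt x y \<ge> \<kappa>0" if "y \<in> {m..m+\<delta>/4}" for y
      using that m1 m2 Suc.prems by (intro wt_M_lower) (auto simp: abs_if)
    have I: "(\<integral>y. wt x y * (1 - r (Suc k) y) \<partial>Om) \<ge> \<kappa>0 * (\<epsilon>1 * q1^k) * ((m + \<delta>/4) - m)"
      using m1 m2 dpos Suc.prems \<kappa>0_pos \<epsilon>1_pos q1_pos
      by (intro int_lower inJ wJ) auto
    have "\<epsilon>1 * q1^(Suc k) = (\<kappa>0 * (\<epsilon>1 * q1^k) * ((m + \<delta>/4) - m)) / amax"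
      by (simp add: q1_def field_simps)
    also have "\<dots> \<le> (dd x + (\<integral>y. wt x y * (1 - r (Suc k) y) \<partial>Om)) / a x"
    proof (rule frac_le)
      show "0 \<le> dd x + (\<integral>y. wt x y * (1 - r (Suc k) y) \<partial>Om)"
        using dd_nonneg[of x] x01 int_wt_r_nonneg[of x "Suc k"] by auto
      show "\<kappa>0 * (\<epsilon>1 * q1^k) * ((m + \<delta>/4) - m) \<le> dd x + (\<integral>y. wt x y * (1 - r (Suc k) y) \<partial>Om)"
        using I dd_nonneg[of x] x01 by auto
      show "0 < a x" using a_pos x01 by auto
      show "a x \<le> amax" by (rule a_le_amax)
    qed
    also have "\<dots> = 1 - r (Suc (Suc k)) x" using r_gain[OF x01, of "Suc k"] by simp
    finally show ?thesis .
  qed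
qed


definition K0 where "K0 = nat \<lceil>4/\<delta>\<rceil>"

lemma M_cover: assumes "x \<le> 1" shows "x \<le> 3*\<delta>/4 + real K0 * \<delta>/4"
proof -
  have "real K0 \<ge> 4/\<delta>" unfolding K0_def by linarith
  then have "real K0 * \<delta> \<ge> 4/\<delta> * \<delta>" using dpos by (intro mult_right_mono) auto
  then have "real K0 * \<delta> / 4 \<ge> 1" using dpos by simp
  then show ?thesis using assms dpos by linarith
qed

definition \<eta>1 where "\<eta>1 = \<epsilon>1 * q1^K0"
lemma \<eta>1_pos: "\<eta>1 > 0" using \<epsilon>1_pos q1_pos by (simp add: \<eta>1_def)

lemma M_gain: assumes "\<delta>/2 \<le> x" "x \<le> 1 - \<delta>/2" shows "1 - r (Suc K0) x \<ge> \<eta>1"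
  unfolding \<eta>1_def using assms M_cover[of x] dpos by (intro propagate) auto

definition \<eta> where "\<eta> = min \<eta>1 1"
lemma \<eta>_pos: "\<eta> > 0" using \<eta>1_pos by (simp add: \<eta>_def)

lemma layer_r: assumes "0 < x" "x < \<delta>/2"
  shows "1 - r (Suc (Suc K0)) x \<ge> \<eta> * c0 * \<delta> / 4 / amax"
proof -
  have x01: "x \<in> {0<..<1}" using assms dlt by auto
  let ?S = "{x+\<delta>/2..<x+\<delta>}"
  let ?I = "\<integral>y. wt x y * (1 - r (Suc K0) y) \<partial>Om"
  have "(\<integral>y. \<eta> * (indicator ?S y * wt x y) \<partial>Om) \<le> ?I"
  proof (rule Om_mono[where B="Wm" and B'="Wm"])
    show "\<bar>\<eta> * (indicator ?S y * wt x y)\<bar> \<le> Wm" for y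
    proof -
      have "\<eta> * (indicator ?S y * wt x y) \<le> 1 * Wm"
        using \<eta>_pos wt_nonneg[of x y] wt_le_Wm[of x y] by (intro mult_mono) (auto simp: \<eta>_def split: split_indicator)
      then show ?thesis using \<eta>_pos wt_nonneg[of x y] by simp
    qed
    show "\<bar>wt x y * (1 - r (Suc K0) y)\<bar> \<le> Wm" if "y \<in> {0<..<1}" for y
    proof -
      have "0 \<le> 1 - r (Suc K0) y" "1 - r (Suc K0) y \<le> 1" using r_bounds[OF that] by auto
      then have "wt x y * (1 - r (Suc K0) y) \<le> Wm * 1" using wt_le_Wm[of x y] wt_nonneg[of x y]
        by (intro mult_mono) auto
      then show ?thesis using \<open>0 \<le> 1 - r (Suc K0) y\<close> wt_nonneg[of x y] by simp
    qed
    fix y :: real assume y: "y \<in> {0<..<1}"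
    show "\<eta> * (indicator ?S y * wt x y) \<le> wt x y * (1 - r (Suc K0) y)"
    proof (cases "y \<in> ?S")
      case True
      have "1 - r (Suc K0) y \<ge> \<eta>1" using True assms dlt by (intro M_gain) auto
      then have "\<eta> \<le> 1 - r (Suc K0) y" by (simp add: \<eta>_def)
      then have "wt x y * \<eta> \<le> wt x y * (1 - r (Suc K0) y)" using wt_nonneg[of x y] by (rule mult_left_mono)
      then show ?thesis using True by (simp add: mult.commute)
    next
      case False then show ?thesis using r_bounds[OF y] wt_nonneg[of x y] by simp
    qed
  qed measurable
  also have "(\<integral>y. \<eta> * (indicator ?S y * wt x y) \<partial>Om) = \<eta> * GG x" by (simp add: GG_def)
  finally have I: "\<eta> * GG x \<le> ?I" .
  have dd0: "dd x \<ge> 0" using dd_nonneg x01 by auto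
  have G0: "GG x \<ge> 0" by (rule GG_nonneg)
  have e1: "\<eta> \<le> 1" "\<eta> > 0" using \<eta>_pos by (auto simp: \<eta>_def)
  have "\<eta> * (c0 * (\<delta>/2)) \<le> \<eta> * (b x * (\<delta>/2))"
  proof (rule mult_left_mono)
    have "c0 \<le> b x" using b_left_lower[of x] assms dpos by (simp add: c0_def)
    then show "c0 * (\<delta>/2) \<le> b x * (\<delta>/2)" using dpos by (intro mult_right_mono) auto
  qed (use e1 in auto)
  also have "\<dots> \<le> \<eta> * (dd x + 2 * GG x)" using layer_gain[OF assms] e1 by (intro mult_left_mono) auto
  also have "\<dots> \<le> 2 * (dd x + \<eta> * GG x)"
  proof -
    have "\<eta> * dd x \<le> dd x" using e1 dd0 by (simp add: mult_left_le_one_le)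
    then show ?thesis using dd0 by (simp add: algebra_simps)
  qed
  also have "\<dots> \<le> 2 * (dd x + ?I)" using I by simp
  finally have N: "\<eta> * c0 * \<delta> / 4 \<le> dd x + ?I" by (simp add: field_simps)
  have "\<eta> * c0 * \<delta> / 4 / amax \<le> (dd x + ?I) / a x"
    using N e1 c0_pos dpos a_pos[of x] x01 a_le_amax[of x] dd0 int_wt_r_nonneg[of x "Suc K0"]
    by (intro frac_le) (auto intro!: mult_nonneg_nonneg)
  also have "\<dots> = 1 - r (Suc (Suc K0)) x" using r_gain[OF x01, of "Suc K0"] by simp
  finally show ?thesis .
qed

definition mK where "mK = Suc (Suc K0)"
definition \<rho> where "\<rho> = 1 - min \<eta>1 (\<eta> * c0 * \<delta> / 4 / amax)"

lemma \<rho>_lt1: "\<rho> < 1"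
  using \<eta>1_pos \<eta>_pos c0_pos dpos amax_pos by (simp add: \<rho>_def)

lemma contraction: assumes "x \<in> {0<..<1}" shows "r mK x \<le> \<rho>"
proof -
  consider "\<delta>/2 \<le> x \<and> x \<le> 1 - \<delta>/2" | "x < \<delta>/2" | "1 - \<delta>/2 < x" by linarith
  then show ?thesis
  proof cases
    case 1
    have "r mK x \<le> r (Suc K0) x" unfolding mK_def using r_mono assms by auto
    also have "\<dots> \<le> 1 - \<eta>1" using M_gain[of x] 1 by linarith
    finally show ?thesis by (simp add: \<rho>_def)
  next
    case 2 then show ?thesis using layer_r[of x] assms by (auto simp: \<rho>_def mK_def)
  next
    case 3
    have "1 - r (Suc (Suc K0)) (1 - x) \<ge> \<eta> * c0 * \<delta> / 4 / amax" using 3 assms by (intro layer_r) auto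
    then show ?thesis using r_sym[of mK x] by (auto simp: \<rho>_def mK_def)
  qed
qed

lemma \<rho>_nonneg: "\<rho> \<ge> 0"
  using contraction[of "1/2"] r_bounds[of "1/2" mK] by auto

end

lemma summable_div_pow:
  fixes \<rho> :: real
  assumes m: "0 < m" and r: "1/2 \<le> \<rho>" "\<rho> < 1"
  shows "summable (\<lambda>i::nat. \<rho>^(i div m))"
proof -
  define s where "s = root m \<rho>"
  have s0: "0 < s" using m r by (simp add: s_def real_root_gt_zero)
  have s1: "s < 1" using m r by (simp add: s_def)
  have sm: "s^m = \<rho>" using m r by (simp add: s_def)
  have bound: "\<rho>^(i div m) \<le> s^i / s^m" for i
  proof -
    have "i \<le> m * (i div m) + m" using m
      by (metis add_le_cancel_left div_mult_mod_eq less_imp_le mod_less_divisor mult.commute)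
    then have "s^(m * (i div m) + m) \<le> s^i" using s0 s1 by (intro power_decreasing) auto
    then have "s^(m * (i div m)) * s^m \<le> s^i" by (simp add: power_add)
    then have "s^(m * (i div m)) \<le> s^i / s^m" using s0 by (simp add: pos_le_divide_eq)
    moreover have "s^(m * (i div m)) = \<rho>^(i div m)" by (simp add: power_mult sm)
    ultimately show ?thesis by simp
  qed
  have "summable (\<lambda>i. s^i / s^m)" using s0 s1 by (intro summable_divide summable_geometric) simp
  then show ?thesis
    by (rule summable_comparison_test') (use bound r in \<open>auto intro: order_trans[OF _ bound]\<close>)
qed

context PS begin

definition \<rho>2 where "\<rho>2 = max \<rho> (1/2)"
lemma \<rho>2: "1/2 \<le> \<rho>2" "\<rho>2 < 1" using \<rho>_lt1 by (auto simp: \<rho>2_def)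
lemma mK_pos: "0 < mK" by (simp add: mK_def)
lemma contraction2: "x \<in> {0<..<1} \<Longrightarrow> r mK x \<le> \<rho>2" using contraction[of x] by (auto simp: \<rho>2_def)

lemma Tpow_ok: "ok g \<Longrightarrow> ok ((Top^^k) g)"
  by (induction k) (auto intro: bm_ok Top_bm)

lemma Tpow_meas[measurable]: "ok g \<Longrightarrow> (Top^^k) g \<in> borel_measurable borel"
  using Tpow_ok by (simp add: ok_def)

lemma Tpow_abs: assumes "ok e" "\<And>y. y \<in> {0<..<1} \<Longrightarrow> \<bar>e y\<bar> \<le> N"
  shows "x \<in> {0<..<1} \<Longrightarrow> \<bar>(Top^^k) e x\<bar> \<le> N * r k x"
proof (induction k arbitrary: x)
  case 0 then show ?case using assms by (simp add: r_0)
next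
  case (Suc k)
  have "\<bar>(Top^^Suc k) e x\<bar> = \<bar>Top ((Top^^k) e) x\<bar>" by simp
  also have "\<dots> \<le> Top (\<lambda>y. \<bar>(Top^^k) e y\<bar>) x" by (rule Top_abs[OF Tpow_ok[OF assms(1)]])
  also have "\<dots> \<le> Top (\<lambda>y. N * r k y) x"
    by (rule Top_mono[OF ok_abs[OF Tpow_ok[OF assms(1)]] ok_cmult[OF r_ok]]) (use Suc.IH in auto)
  also have "\<dots> = N * r (Suc k) x" by (simp add: Top_cmult r_Suc)
  finally show ?case .
qed

lemma r_pow: "x \<in> {0<..<1} \<Longrightarrow> r k x \<le> \<rho>2^(k div mK)"
proof (induction k arbitrary: x rule: less_induct)
  case (less k)
  show ?case
  proof (cases "k < mK")
    case True then show ?thesis using r_bounds[OF less.prems] by simp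
  next
    case False
    then obtain j where k: "k = mK + j" by (metis le_add_diff_inverse not_less)
    have jk: "j < k" using k mK_pos by simp
    have rk: "r k = (Top^^mK) (r j)" unfolding k r_def by (simp add: funpow_add)
    have "\<bar>(Top^^mK) (r j) x\<bar> \<le> \<rho>2^(j div mK) * r mK x"
      by (rule Tpow_abs[OF r_ok _ less.prems]) (use less.IH[OF jk] r_bounds in auto)
    also have "\<dots> \<le> \<rho>2^(j div mK) * \<rho>2"
      using contraction2[OF less.prems] \<rho>2 by (intro mult_left_mono) auto
    also have "\<dots> = \<rho>2^(k div mK)" using k mK_pos by simp
    finally show ?thesis unfolding rk by simp
  qed
qed

lemma Tpow_bound: assumes "ok e" "\<And>y. y \<in> {0<..<1} \<Longrightarrow> \<bar>e y\<bar> \<le> N" "x \<in> {0<..<1}"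
  shows "\<bar>(Top^^k) e x\<bar> \<le> N * \<rho>2^(k div mK)"
proof -
  have N0: "N \<ge> 0" using assms(2)[of "1/2"] by auto
  have "\<bar>(Top^^k) e x\<bar> \<le> N * r k x" by (rule Tpow_abs[OF assms])
  also have "\<dots> \<le> N * \<rho>2^(k div mK)" using r_pow[OF assms(3)] N0 by (intro mult_left_mono) auto
  finally show ?thesis .
qed


lemma Tpow_cong: assumes "\<And>y. y \<in> {0<..<1} \<Longrightarrow> g1 y = g2 y"
  shows "x \<in> {0<..<1} \<Longrightarrow> (Top^^k) g1 x = (Top^^k) g2 x"
proof (induction k arbitrary: x)
  case 0 then show ?case using assms by simp
next
  case (Suc k) then show ?case by (simp, intro Top_cong) auto
qed

lemma Tpow_add: assumes "ok g1" "ok g2"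
  shows "(Top^^k) (\<lambda>y. g1 y + g2 y) x = (Top^^k) g1 x + (Top^^k) g2 x"
proof (induction k arbitrary: x)
  case 0 then show ?case by simp
next
  case (Suc k)
  have e: "(Top^^k) (\<lambda>y. g1 y + g2 y) = (\<lambda>y. (Top^^k) g1 y + (Top^^k) g2 y)"
    using Suc.IH by (simp add: fun_eq_iff)
  have "(Top^^Suc k) (\<lambda>y. g1 y + g2 y) x = Top (\<lambda>y. (Top^^k) g1 y + (Top^^k) g2 y) x"
    by (simp only: funpow.simps comp_apply e)
  also have "\<dots> = (Top^^Suc k) g1 x + (Top^^Suc k) g2 x"
    by (simp add: Top_add[OF Tpow_ok[OF assms(1)] Tpow_ok[OF assms(2)]])
  finally show ?case .
qed

lemma fix_expand: assumes "ok g" "ok v" "\<And>x. x \<in> {0<..<1} \<Longrightarrow> v x = g x + Top v x" "x \<in> {0<..<1}"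
  shows "v x = (\<Sum>i<j. (Top^^i) g x) + (Top^^j) v x"
proof (induction j)
  case 0 then show ?case by simp
next
  case (Suc j)
  have "(Top^^j) v x = (Top^^j) (\<lambda>y. g y + Top v y) x"
    by (rule Tpow_cong[OF assms(3) assms(4)])
  also have "\<dots> = (Top^^j) g x + (Top^^j) (Top v) x"
    by (rule Tpow_add[OF assms(1) bm_ok[OF Top_bm[OF assms(2)]]])
  also have "(Top^^j) (Top v) = (Top^^Suc j) v" by (simp add: funpow_Suc_right del: funpow.simps)
  finally show ?case using Suc.IH by simp
qed

lemma fix_bound: assumes "ok g" "bm v" "\<And>y. y \<in> {0<..<1} \<Longrightarrow> \<bar>g y\<bar> \<le> G"
  "\<And>x. x \<in> {0<..<1} \<Longrightarrow> v x = g x + Top v x"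
  shows "x \<in> {0<..<1} \<Longrightarrow> \<bar>v x\<bar> \<le> real mK * G / (1 - \<rho>2)"
proof -
  obtain B where B: "\<forall>y\<in>{0<..<1}. \<bar>v y\<bar> \<le> B" using assms(2) by (auto simp: bm_def)
  define N where "N = Sup ((\<lambda>x. \<bar>v x\<bar>) ` {0<..<1::real})"
  have ne: "(\<lambda>x. \<bar>v x\<bar>) ` {0<..<1::real} \<noteq> {}" by auto
  have bdd: "bdd_above ((\<lambda>x. \<bar>v x\<bar>) ` {0<..<1::real})" using B by (auto intro!: bdd_aboveI)
  have vN: "\<bar>v x\<bar> \<le> N" if "x \<in> {0<..<1}" for x
    unfolding N_def using that bdd by (intro cSup_upper) auto
  have N0: "N \<ge> 0" using vN[of "1/2"] by auto
  have G0: "G \<ge> 0" using assms(3)[of "1/2"] by auto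
  have step: "\<bar>v x\<bar> \<le> real mK * G + \<rho>2 * N" if x: "x \<in> {0<..<1}" for x
  proof -
    have "v x = (\<Sum>i<mK. (Top^^i) g x) + (Top^^mK) v x"
      by (rule fix_expand[OF assms(1) bm_ok[OF assms(2)] assms(4) x])
    then have "\<bar>v x\<bar> \<le> \<bar>\<Sum>i<mK. (Top^^i) g x\<bar> + \<bar>(Top^^mK) v x\<bar>"
      using abs_triangle_ineq by simp
    moreover have "\<bar>\<Sum>i<mK. (Top^^i) g x\<bar> \<le> (\<Sum>i<mK. \<bar>(Top^^i) g x\<bar>)" by (rule sum_abs)
    ultimately have "\<bar>v x\<bar> \<le> (\<Sum>i<mK. \<bar>(Top^^i) g x\<bar>) + \<bar>(Top^^mK) v x\<bar>" by linarith
    also have "(\<Sum>i<mK. \<bar>(Top^^i) g x\<bar>) \<le> (\<Sum>i<mK. G)"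
    proof (rule sum_mono)
      fix i
      have "\<bar>(Top^^i) g x\<bar> \<le> G * \<rho>2^(i div mK)" by (rule Tpow_bound[OF assms(1) assms(3) x])
      also have "\<dots> \<le> G * 1" using G0 \<rho>2 by (intro mult_left_mono power_le_one) auto
      finally show "\<bar>(Top^^i) g x\<bar> \<le> G" by simp
    qed
    also have "\<bar>(Top^^mK) v x\<bar> \<le> N * \<rho>2^(mK div mK)"
      by (rule Tpow_bound[OF bm_ok[OF assms(2)] vN x])
    finally show ?thesis using mK_pos by (simp add: mult.commute)
  qed
  have "N \<le> real mK * G + \<rho>2 * N"
    unfolding N_def[of] using ne step by (intro cSup_least) (auto simp: N_def[symmetric])
  then have "N * (1 - \<rho>2) \<le> real mK * G" by (simp add: algebra_simps)
  then have "N \<le> real mK * G / (1 - \<rho>2)" using \<rho>2 by (simp add: pos_le_divide_eq)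
  then show "x \<in> {0<..<1} \<Longrightarrow> \<bar>v x\<bar> \<le> real mK * G / (1 - \<rho>2)" using vN by force
qed


lemma fix_exists: assumes "ok g" "\<And>y. y \<in> {0<..<1} \<Longrightarrow> \<bar>g y\<bar> \<le> G"
  shows "\<exists>v. bm v \<and> (\<forall>x\<in>{0<..<1}. v x = g x + Top v x)"
proof -
  have G0: "G \<ge> 0" using assms(2)[of "1/2"] by auto
  have sumr: "summable (\<lambda>i. \<rho>2^(i div mK))" using summable_div_pow[OF mK_pos \<rho>2] .
  define S where "S = (\<Sum>i. \<rho>2^(i div mK))"
  have tb: "\<bar>(Top^^i) g y\<bar> \<le> G * \<rho>2^(i div mK)" if "y \<in> {0<..<1}" for i y
    by (rule Tpow_bound[OF assms that])
  have sumy: "summable (\<lambda>i. \<bar>(Top^^i) g y\<bar>)" if "y \<in> {0<..<1}" for y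
    by (rule summable_comparison_test'[OF summable_mult[OF sumr, of G]]) (use tb[OF that] in auto)
  have sumy': "summable (\<lambda>i. (Top^^i) g y)" if "y \<in> {0<..<1}" for y
    using sumy[OF that] by (rule summable_rabs_cancel)
  define v where "v x = (if x \<in> {0<..<1} then (\<Sum>i. (Top^^i) g x) else 0)" for x
  have [measurable]: "\<And>i. (Top^^i) g \<in> borel_measurable borel" using Tpow_meas[OF assms(1)] by auto
  have vm: "v \<in> borel_measurable borel" unfolding v_def by measurable
  have vb: "\<bar>v x\<bar> \<le> G * S" if "x \<in> {0<..<1}" for x
  proof -
    have "\<bar>v x\<bar> \<le> (\<Sum>i. \<bar>(Top^^i) g x\<bar>)" using that sumy[OF that] by (simp add: v_def summable_rabs)
    also have "\<dots> \<le> (\<Sum>i. G * \<rho>2^(i div mK))"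
      by (rule suminf_le[OF tb[OF that] sumy[OF that] summable_mult[OF sumr]])
    also have "\<dots> = G * S" unfolding S_def by (rule suminf_mult[OF sumr])
    finally show ?thesis .
  qed
  have vbm: "bm v" unfolding bm_def using vm vb by (intro conjI exI[of _ "G * S"]) auto
  have eq: "v x = g x + Top v x" if x: "x \<in> {0<..<1}" for x
  proof -
    have "(\<integral>y. wt x y * v y \<partial>Om) = (\<integral>y. (\<Sum>i. wt x y * (Top^^i) g y) \<partial>Om)"
      by (rule Bochner_Integration.integral_cong) (auto simp: v_def suminf_mult[OF sumy'])
    also have "\<dots> = (\<Sum>i. (\<integral>y. wt x y * (Top^^i) g y \<partial>Om))"
    proof (rule integral_suminf)
      show "integrable Om (\<lambda>y. wt x y * (Top^^i) g y)" for i by (rule ok_wt_int[OF Tpow_ok[OF assms(1)]])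
      show "AE y in Om. summable (\<lambda>i. norm (wt x y * (Top^^i) g y))"
      proof (rule AE_I2)
        fix y assume y: "y \<in> space Om"
        show "summable (\<lambda>i. norm (wt x y * (Top^^i) g y))"
        proof (rule summable_comparison_test'[OF summable_mult[OF summable_mult[OF sumr, of G], of Wm]])
          fix i :: nat
          have "\<bar>wt x y\<bar> * \<bar>(Top^^i) g y\<bar> \<le> Wm * (G * \<rho>2^(i div mK))"
            using y tb[of y i] wt_nonneg[of x y] wt_le_Wm[of x y] by (intro mult_mono) auto
          then show "norm (norm (wt x y * (Top^^i) g y)) \<le> Wm * (G * \<rho>2^(i div mK))" by (simp add: abs_mult)
        qed
      qed
      show "summable (\<lambda>i. \<integral>y. norm (wt x y * (Top^^i) g y) \<partial>Om)"
      proof (rule summable_comparison_test'[OF summable_mult[OF summable_mult[OF sumr, of G], of Wm]])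
        fix i :: nat
        have "(\<integral>y. norm (wt x y * (Top^^i) g y) \<partial>Om) \<le> (\<integral>y. Wm * (G * \<rho>2^(i div mK)) \<partial>Om)"
        proof (rule integral_mono)
          show "integrable Om (\<lambda>y. norm (wt x y * (Top^^i) g y))"
            using ok_wt_int[OF Tpow_ok[OF assms(1)]] by auto
          show "integrable Om (\<lambda>y. Wm * (G * \<rho>2^(i div mK)))"
            by (rule Om_integrable_bound[where B="\<bar>Wm * (G * \<rho>2^(i div mK))\<bar>"]) auto
          fix y assume y: "y \<in> space Om"
          have "\<bar>wt x y\<bar> * \<bar>(Top^^i) g y\<bar> \<le> Wm * (G * \<rho>2^(i div mK))"
            using y tb[of y i] wt_nonneg[of x y] wt_le_Wm[of x y] by (intro mult_mono) auto
          then show "norm (wt x y * (Top^^i) g y) \<le> Wm * (G * \<rho>2^(i div mK))" by (simp add: abs_mult)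
        qed
        also have "\<dots> = Wm * (G * \<rho>2^(i div mK))" by (rule Om_const)
        finally show "norm (\<integral>y. norm (wt x y * (Top^^i) g y) \<partial>Om) \<le> Wm * (G * \<rho>2^(i div mK))"
          by simp
      qed
    qed
    finally have I: "(\<integral>y. wt x y * v y \<partial>Om) = (\<Sum>i. (\<integral>y. wt x y * (Top^^i) g y \<partial>Om))" .
    have sI: "summable (\<lambda>i. (\<integral>y. wt x y * (Top^^i) g y \<partial>Om))"
    proof -
      have "summable (\<lambda>i. (Top^^Suc i) g x)" using sumy'[OF x] summable_Suc_iff[of "\<lambda>i. (Top^^i) g x"] by blast
      moreover have "(Top^^Suc i) g x = (\<integral>y. wt x y * (Top^^i) g y \<partial>Om) / a x" for i
        using x by (simp add: Top_def)
      ultimately have "summable (\<lambda>i. (\<integral>y. wt x y * (Top^^i) g y \<partial>Om) / a x)" by simp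
      then show ?thesis using a_pos[of x] x by simp
    qed
    have "Top v x = (\<Sum>i. (\<integral>y. wt x y * (Top^^i) g y \<partial>Om)) / a x" using x I by (simp add: Top_def)
    also have "\<dots> = (\<Sum>i. (\<integral>y. wt x y * (Top^^i) g y \<partial>Om) / a x)" by (rule suminf_divide[OF sI, symmetric])
    also have "\<dots> = (\<Sum>i. (Top^^Suc i) g x)" using x by (simp add: Top_def)
    also have "\<dots> = (\<Sum>i. (Top^^i) g x) - g x" using suminf_split_head[OF sumy'[OF x]] by simp
    finally show ?thesis using x by (simp add: v_def)
  qed
  show ?thesis using vbm eq by blast
qed

end

lemma L2_repr: assumes "L2 u" shows "\<exists>h. ok h \<and> (\<forall>y\<in>{0<..<1}. h y = u y)"
proof -
  have um: "u \<in> borel_measurable Om" and ui: "integrable Om (\<lambda>x. (u x)^2)" using assms by (auto simp: L2_def)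
  define h where "h y = indicator {0<..<1} y * u y" for y :: real
  have "(\<lambda>x. indicator {0<..<1} x *\<^sub>R u x) \<in> borel_measurable lborel"
    using um by (subst (asm) borel_measurable_restrict_space_iff) auto
  then have hm: "h \<in> borel_measurable borel" unfolding h_def by (simp add: measurable_lborel1 cong: measurable_cong_sets)
  have "integrable Om (\<lambda>x. (h x)^2)"
    using ui by (rule Bochner_Integration.integrable_cong[THEN iffD1, rotated -1]) (auto simp: h_def)
  then show ?thesis using hm by (intro exI[of _ h]) (auto simp: ok_def h_def)
qed

lemma L2_of_ok: assumes "ok h" "\<And>y. y \<in> {0<..<1} \<Longrightarrow> f y = h y" shows "L2 f"
proof -
  have "h \<in> borel_measurable Om" using assms(1) by (auto simp: ok_def intro: measurable_restrict_space1)
  then have "f \<in> borel_measurable Om" by (rule measurable_cong[THEN iffD1, rotated]) (use assms(2) in auto)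
  moreover have "integrable Om (\<lambda>x. (f x)^2)"
    using assms(1) unfolding ok_def
    by (intro Bochner_Integration.integrable_cong[THEN iffD1, OF refl _ conjunct2]) (use assms(2) in auto)
  ultimately show ?thesis by (simp add: L2_def)
qed

lemma L2norm_cong: assumes "\<And>y. y \<in> {0<..<1} \<Longrightarrow> f y = h y" shows "L2norm f = L2norm h"
proof -
  have "(\<integral>x. (f x)^2 \<partial>Om) = (\<integral>x. (h x)^2 \<partial>Om)"
    by (rule Bochner_Integration.integral_cong) (use assms in auto)
  then show ?thesis by (simp add: L2norm_def)
qed

lemma ok_mult_bounded: assumes "ok h" "c \<in> borel_measurable borel" "\<And>y. y \<in> {0<..<1} \<Longrightarrow> \<bar>c y\<bar> \<le> C"
  shows "ok (\<lambda>y. c y * h y)"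
proof -
  have hm[measurable]: "h \<in> borel_measurable borel" using assms(1) by (simp add: ok_def)
  have [measurable]: "c \<in> borel_measurable borel" by (rule assms(2))
  have "integrable Om (\<lambda>y. (c y * h y)^2)"
  proof (rule Bochner_Integration.integrable_bound)
    show "integrable Om (\<lambda>y. C^2 * (h y)^2)" using assms(1) by (auto simp: ok_def)
    show "(\<lambda>y. (c y * h y)^2) \<in> borel_measurable Om" by (intro measurable_restrict_space1) measurable
    show "AE y in Om. norm ((c y * h y)^2) \<le> norm (C^2 * (h y)^2)"
    proof (rule AE_I2)
      fix y assume "y \<in> space Om"
      then have "\<bar>c y\<bar> \<le> C" using assms(3) by auto
      then have "\<bar>c y\<bar>^2 \<le> C^2" by (intro power_mono) auto
      then have "(c y)^2 * (h y)^2 \<le> C^2 * (h y)^2" by (intro mult_right_mono) auto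
      then show "norm ((c y * h y)^2) \<le> norm (C^2 * (h y)^2)" by (simp add: power_mult_distrib)
    qed
  qed
  moreover have "(\<lambda>y. c y * h y) \<in> borel_measurable borel" by measurable
  ultimately show ?thesis by (simp add: ok_def)
qed

lemma Om_meas1: "measure Om {0<..<1} = 1"
proof -
  have "measure Om {0<..<1} = measure lborel {0<..<1::real}"
    by (rule measure_restrict_space) auto
  then show ?thesis by simp
qed

lemma L1_le_L2: assumes "ok p" shows "(\<integral>y. \<bar>p y\<bar> \<partial>Om) \<le> sqrt (\<integral>y. (p y)^2 \<partial>Om)"
proof -
  let ?Q = "\<integral>y. (p y)^2 \<partial>Om"
  have pi: "integrable Om (\<lambda>y. (p y)^2)" using assms by (simp add: ok_def)
  have ai: "integrable Om (\<lambda>y. \<bar>p y\<bar>)" using ok_int[OF assms] by simp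
  have Q0: "?Q \<ge> 0" by simp
  have key: "(\<integral>y. \<bar>p y\<bar> \<partial>Om) \<le> (t + ?Q / t) / 2" if t: "t > 0" for t
  proof -
    have pt: "\<bar>p y\<bar> \<le> (t + (p y)^2 / t) / 2" for y
    proof -
      have "0 \<le> (\<bar>p y\<bar> - t)^2" by simp
      then have "2 * t * \<bar>p y\<bar> \<le> t^2 + (p y)^2" by (simp add: power2_eq_square algebra_simps)
      then show ?thesis using t by (simp add: field_simps power2_eq_square)
    qed
    have "(\<integral>y. \<bar>p y\<bar> \<partial>Om) \<le> (\<integral>y. (t + (p y)^2 / t) / 2 \<partial>Om)"
    proof (rule integral_mono[OF ai])
      have "integrable Om (\<lambda>y. t::real)" by (rule Om_integrable_bound[where B="\<bar>t\<bar>"]) auto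
      then show "integrable Om (\<lambda>y. (t + (p y)^2 / t) / 2)" using pi by auto
    qed (rule pt)
    also have "\<dots> = (t + ?Q / t) / 2"
    proof -
      have "integrable Om (\<lambda>y. t::real)" by (rule Om_integrable_bound[where B="\<bar>t\<bar>"]) auto
      then have "(\<integral>y. t + (p y)^2 / t \<partial>Om) = t + ?Q / t"
        using pi by (simp add: Bochner_Integration.integral_add Om_meas1)
      then show ?thesis by simp
    qed
    finally show ?thesis .
  qed
  show ?thesis
  proof (cases "?Q > 0")
    case True
    have "(\<integral>y. \<bar>p y\<bar> \<partial>Om) \<le> (sqrt ?Q + ?Q / sqrt ?Q) / 2" using key[of "sqrt ?Q"] True by simp
    also have "?Q / sqrt ?Q = sqrt ?Q" using True by (simp add: real_div_sqrt)
    finally show ?thesis by simp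
  next
    case False
    then have Qz: "?Q = 0" using Q0 by simp
    have "(\<integral>y. \<bar>p y\<bar> \<partial>Om) \<le> 0"
    proof (rule ccontr)
      assume "\<not> ?thesis"
      then have X: "(\<integral>y. \<bar>p y\<bar> \<partial>Om) > 0" by simp
      have "(\<integral>y. \<bar>p y\<bar> \<partial>Om) \<le> (\<integral>y. \<bar>p y\<bar> \<partial>Om) / 2" using key[OF X] Qz by simp
      then show False using X by simp
    qed
    then show ?thesis using Qz by simp
  qed
qed


context PS begin

lemma a_nonneg: "a x \<ge> 0"
  unfolding a_eq using W_nonneg by (intro integral_nonneg_AE AE_I2) auto

lemma a_abs_le: "\<bar>a x\<bar> \<le> amax" using a_nonneg[of x] a_le_amax[of x] by simp

lemma Pt_eq: assumes "\<And>y. y \<in> {0<..<1} \<Longrightarrow> h y = u y" "x \<in> {0<..<1}"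
  shows "Pt w \<delta> u x = a x * h x - a x * Top h x"
proof -
  have "(LINT y:{0<..<1}|lborel. u y * wt x y) = (\<integral>y. wt x y * h y \<partial>Om)"
    unfolding set_int_Om by (rule Bochner_Integration.integral_cong) (use assms in auto)
  also have "\<dots> = a x * Top h x" using assms(2) a_pos[of x] by (simp add: Top_def)
  finally show ?thesis using assms by (simp add: Pt_def)
qed

definition pp where "pp h = (\<lambda>x. a x * h x - a x * Top h x)"

lemma pp_ok: assumes "ok h" shows "ok (pp h)"
proof -
  have "ok (\<lambda>x. a x * h x)" by (rule ok_mult_bounded[OF assms a_meas a_abs_le])
  moreover have "ok (\<lambda>x. a x * Top h x)" by (rule ok_mult_bounded[OF bm_ok[OF Top_bm[OF assms]] a_meas a_abs_le])
  ultimately show ?thesis unfolding pp_def by (rule ok_diff)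
qed

lemma part1: assumes "L2 u" shows "L2 (Pt w \<delta> u)"
proof -
  obtain h where h: "ok h" "\<And>y. y \<in> {0<..<1} \<Longrightarrow> h y = u y" using L2_repr[OF assms] by blast
  show ?thesis
  proof (rule L2_of_ok[OF pp_ok[OF h(1)]])
    fix y :: real assume "y \<in> {0<..<1}"
    then show "Pt w \<delta> u y = pp h y" using Pt_eq[OF h(2)] by (simp add: pp_def)
  qed
qed

lemma inv_a_ok: assumes "ok p" shows "ok (\<lambda>y. (1 / a y) * p y)"
proof (rule ok_mult_bounded[OF assms])
  show "(\<lambda>y. 1 / a y) \<in> borel_measurable borel" by measurable
  fix y :: real assume y: "y \<in> {0<..<1}"
  then have "a y \<ge> amin" using a_lower by auto
  then show "\<bar>1 / a y\<bar> \<le> 1 / amin" using amin_pos by (simp add: frac_le)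
qed

lemma part2: assumes "L2 f" shows "\<exists>u. L2 u \<and> (AE x in Om. Pt w \<delta> u x = f x)"
proof -
  obtain hf where hf: "ok hf" "\<And>y. y \<in> {0<..<1} \<Longrightarrow> hf y = f y" using L2_repr[OF assms] by blast
  define \<phi> where "\<phi> = (\<lambda>y. (1 / a y) * hf y)"
  have \<phi>ok: "ok \<phi>" unfolding \<phi>_def by (rule inv_a_ok[OF hf(1)])
  have gbm: "bm (Top \<phi>)" by (rule Top_bm[OF \<phi>ok])
  then obtain G where G: "\<forall>y\<in>{0<..<1}. \<bar>Top \<phi> y\<bar> \<le> G" by (auto simp: bm_def)
  obtain v where v: "bm v" "\<And>x. x \<in> {0<..<1} \<Longrightarrow> v x = Top \<phi> x + Top v x"
    using fix_exists[OF bm_ok[OF gbm], of G] G by blast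
  define u where "u = (\<lambda>y. \<phi> y + v y)"
  have uok: "ok u" unfolding u_def by (rule ok_add[OF \<phi>ok bm_ok[OF v(1)]])
  have "L2 u" by (rule L2_of_ok[OF uok]) simp
  moreover have "Pt w \<delta> u x = f x" if x: "x \<in> {0<..<1}" for x
  proof -
    have "Pt w \<delta> u x = a x * u x - a x * Top u x" by (rule Pt_eq[OF _ x]) simp
    also have "Top u x = Top \<phi> x + Top v x" unfolding u_def by (rule Top_add[OF \<phi>ok bm_ok[OF v(1)]])
    also have "\<dots> = v x" using v(2)[OF x] by simp
    finally have "Pt w \<delta> u x = a x * \<phi> x" by (simp add: u_def algebra_simps)
    also have "\<dots> = f x" using a_pos[of x] x hf(2)[OF x] by (simp add: \<phi>_def)
    finally show ?thesis .
  qed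
  then have "AE x in Om. Pt w \<delta> u x = f x" by (intro AE_I2) auto
  ultimately show ?thesis by blast
qed


definition Dc where "Dc = real mK * Wm / (amin^2 * (1 - \<rho>2))"
definition C1 where "C1 = 2 / amin^2 + 2 * Dc^2"

lemma C1_pos: "C1 > 0" using amin_pos by (simp add: C1_def add_pos_nonneg)

lemma part4: assumes "L2 u" shows "L2norm u \<le> sqrt C1 * L2norm (Pt w \<delta> u)"
proof -
  obtain h where h: "ok h" "\<And>y. y \<in> {0<..<1} \<Longrightarrow> h y = u y" using L2_repr[OF assms] by blast
  define p where "p = pp h"
  have pok: "ok p" unfolding p_def by (rule pp_ok[OF h(1)])
  have pPt: "Pt w \<delta> u y = p y" if "y \<in> {0<..<1}" for y using Pt_eq[OF h(2) that] by (simp add: p_def pp_def)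
  define Np where "Np = sqrt (\<integral>y. (p y)^2 \<partial>Om)"
  have NpL: "L2norm (Pt w \<delta> u) = Np" using L2norm_cong[of "Pt w \<delta> u" p] pPt by (simp add: L2norm_def Np_def)
  have Np0: "Np \<ge> 0" unfolding Np_def by simp
  define \<phi> where "\<phi> = (\<lambda>y. (1 / a y) * p y)"
  have \<phi>ok: "ok \<phi>" unfolding \<phi>_def by (rule inv_a_ok[OF pok])
  define v where "v = Top h"
  have vbm: "bm v" unfolding v_def by (rule Top_bm[OF h(1)])
  have hsplit: "h y = \<phi> y + v y" if y: "y \<in> {0<..<1}" for y
    using a_pos[of y] y by (simp add: \<phi>_def v_def p_def pp_def field_simps)
  have veq: "v x = Top \<phi> x + Top v x" if x: "x \<in> {0<..<1}" for x
  proof -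
    have "v x = Top (\<lambda>y. \<phi> y + v y) x" unfolding v_def by (rule Top_cong) (simp add: hsplit v_def)
    also have "\<dots> = Top \<phi> x + Top v x" by (rule Top_add[OF \<phi>ok bm_ok[OF vbm]])
    finally show ?thesis .
  qed
  have pa: "\<bar>\<phi> y\<bar> \<le> 1 / amin * \<bar>p y\<bar>" if y: "y \<in> {0<..<1}" for y
  proof -
    have "a y \<ge> amin" using a_lower y by auto
    then have "\<bar>1 / a y\<bar> \<le> 1 / amin" using amin_pos by (simp add: frac_le)
    then show ?thesis unfolding \<phi>_def abs_mult by (intro mult_right_mono) auto
  qed
  have L1\<phi>: "(\<integral>y. \<bar>\<phi> y\<bar> \<partial>Om) \<le> Np / amin"
  proof -
    have "(\<integral>y. \<bar>\<phi> y\<bar> \<partial>Om) \<le> (\<integral>y. 1 / amin * \<bar>p y\<bar> \<partial>Om)"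
      using ok_int[OF \<phi>ok] ok_int[OF pok] pa by (intro integral_mono) auto
    also have "\<dots> = 1 / amin * (\<integral>y. \<bar>p y\<bar> \<partial>Om)" by simp
    also have "\<dots> \<le> 1 / amin * Np" unfolding Np_def using L1_le_L2[OF pok] amin_pos by (intro mult_left_mono) auto
    finally show ?thesis by simp
  qed
  define G where "G = Wm / amin * (Np / amin)"
  have gb: "\<bar>Top \<phi> y\<bar> \<le> G" if "y \<in> {0<..<1}" for y
  proof -
    have "\<bar>Top \<phi> y\<bar> \<le> Wm / amin * (\<integral>y. \<bar>\<phi> y\<bar> \<partial>Om)" by (rule Top_bound[OF \<phi>ok])
    also have "\<dots> \<le> G" unfolding G_def using L1\<phi> Wm_nonneg amin_pos by (intro mult_left_mono) auto
    finally show ?thesis .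
  qed
  define V where "V = real mK * G / (1 - \<rho>2)"
  have vb: "\<bar>v x\<bar> \<le> V" if "x \<in> {0<..<1}" for x
    unfolding V_def by (rule fix_bound[OF bm_ok[OF Top_bm[OF \<phi>ok]] vbm gb veq that])
  have VD: "V = Dc * Np" unfolding V_def G_def Dc_def using amin_pos \<rho>2 by (simp add: field_simps power2_eq_square)
  have "(\<integral>y. (h y)^2 \<partial>Om) \<le> (\<integral>y. 2 * (1 / amin^2 * (p y)^2) + 2 * V^2 \<partial>Om)"
  proof (rule integral_mono)
    show "integrable Om (\<lambda>y. (h y)^2)" using h(1) by (simp add: ok_def)
    have "integrable Om (\<lambda>y. V^2)" by (rule Om_integrable_bound[where B="V^2"]) auto
    then show "integrable Om (\<lambda>y. 2 * (1 / amin^2 * (p y)^2) + 2 * V^2)" using pok by (auto simp: ok_def)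
    fix y assume y: "y \<in> space Om"
    then have y': "y \<in> {0<..<1}" by simp
    have "(h y)^2 \<le> 2 * (\<phi> y)^2 + 2 * (v y)^2" unfolding hsplit[OF y'] by (rule sq_sum_le)
    also have "(\<phi> y)^2 \<le> 1 / amin^2 * (p y)^2"
    proof -
      have "\<bar>\<phi> y\<bar>^2 \<le> (1 / amin * \<bar>p y\<bar>)^2" using pa[OF y'] by (intro power_mono) auto
      then show ?thesis by (simp add: power_mult_distrib power_divide)
    qed
    also have "(v y)^2 \<le> V^2"
    proof -
      have "\<bar>v y\<bar>^2 \<le> V^2" using vb[OF y'] by (intro power_mono) auto
      then show ?thesis by simp
    qed
    finally show "(h y)^2 \<le> 2 * (1 / amin^2 * (p y)^2) + 2 * V^2" by simp
  qed
  also have "\<dots> = 2 / amin^2 * (\<integral>y. (p y)^2 \<partial>Om) + 2 * V^2"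
  proof -
    have i2: "integrable Om (\<lambda>y. 2 * V^2)" by (rule Om_integrable_bound[where B="2 * V^2"]) auto
    have i1: "integrable Om (\<lambda>y. 2 * (1 / amin^2 * (p y)^2))" using pok by (simp add: ok_def)
    have "(\<integral>y. 2 * (1 / amin^2 * (p y)^2) + 2 * V^2 \<partial>Om) = (\<integral>y. 2 * (1 / amin^2 * (p y)^2) \<partial>Om) + (\<integral>y. 2 * V^2 \<partial>Om)"
      by (rule Bochner_Integration.integral_add[OF i1 i2])
    also have "(\<integral>y. 2 * (1 / amin^2 * (p y)^2) \<partial>Om) = 2 / amin^2 * (\<integral>y. (p y)^2 \<partial>Om)" by simp
    also have "(\<integral>y. 2 * V^2 \<partial>Om) = 2 * V^2" by (rule Om_const)
    finally show ?thesis .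
  qed
  also have "(\<integral>y. (p y)^2 \<partial>Om) = Np^2" unfolding Np_def by simp
  also have "2 / amin^2 * Np^2 + 2 * V^2 = C1 * Np^2" unfolding VD C1_def by (simp add: algebra_simps power_mult_distrib)
  finally have hI: "(\<integral>y. (h y)^2 \<partial>Om) \<le> C1 * Np^2" .
  have "L2norm u = sqrt (\<integral>y. (h y)^2 \<partial>Om)" using L2norm_cong[of u h] h(2) by (simp add: L2norm_def)
  also have "\<dots> \<le> sqrt (C1 * Np^2)" using hI by simp
  also have "\<dots> = sqrt C1 * Np" using Np0 C1_pos by (simp add: real_sqrt_mult)
  finally show ?thesis using NpL by simp
qed

lemma part3: assumes "L2 u" "AE x in Om. Pt w \<delta> u x = 0" shows "AE x in Om. u x = 0"
proof -
  have "(\<integral>x. (Pt w \<delta> u x)^2 \<partial>Om) = (\<integral>x. 0 \<partial>Om)"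
    by (rule integral_cong_AE) (use assms(2) part1[OF assms(1)] in \<open>auto simp: L2_def elim!: eventually_mono\<close>)
  then have "L2norm (Pt w \<delta> u) = 0" by (simp add: L2norm_def)
  then have "L2norm u \<le> 0" using part4[OF assms(1)] by simp
  moreover have "(\<integral>x. (u x)^2 \<partial>Om) \<ge> 0" by (intro integral_nonneg_AE AE_I2) simp
  ultimately have I0: "(\<integral>x. (u x)^2 \<partial>Om) = 0" by (simp add: L2norm_def)
  have ui: "integrable Om (\<lambda>x. (u x)^2)" using assms(1) by (simp add: L2_def)
  have "AE x in Om. (u x)^2 = 0" using I0 integral_nonneg_eq_0_iff_AE[OF ui] by simp
  then show ?thesis by (auto elim: eventually_mono)
qed

end

theorem mainTheorem1:
  fixes w :: "real \<Rightarrow> real" and \<delta> :: real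
  assumes A1: "A1 w"
    and delta: "0 < \<delta>" "\<delta> < 1/2"
    and A2: "\<forall>x\<in>{0<..<1}. a_d w \<delta> x \<ge> (LINT y:{0<..<1}|lborel. wt_d w \<delta> x y)"
  shows "(\<forall>u. L2 u \<longrightarrow> L2 (Pt w \<delta> u))
       \<and> (\<forall>f. L2 f \<longrightarrow> (\<exists>u. L2 u \<and> (AE x in Om. Pt w \<delta> u x = f x)))
       \<and> (\<forall>u. L2 u \<longrightarrow> (AE x in Om. Pt w \<delta> u x = 0) \<longrightarrow> (AE x in Om. u x = 0))
       \<and> (\<exists>C>0. \<forall>u. L2 u \<longrightarrow> L2norm u \<le> C * L2norm (Pt w \<delta> u))"
proof -
  interpret PS w \<delta> using assms by unfold_locales auto
  show ?thesis
    using part1 part2 part3 part4 C1_pos by (auto intro!: exI[of _ "sqrt C1"])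
qed

end
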